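(* In the game $\mathrm{CubeGame}(p,K)$ with expert oracle (defined in the context), any sound planner that makes fewer than $\Omega(p/\log p)$ oracle queries has sample complexity (expected number of actions) $N\ge 2^{\Omega(p\wedge K)}$.
   Context: Fix integers $p,K\ge1$ (with $p$ divisible by $4$). Let $W=\{\pm1\}^p$, $\rho(x,y)=\tfrac12(p-x^\top y)$ the Hamming distance, $w_0=\vec 1$ (all-ones vector), and $g(x)=1-x/p$. The hidden parameter $w^\star$ lies in $W^\star=\{w\in W:\ p/4\le\rho(\vec1,w)\le 3p/4\}$. For $k\ge1$, $W^{\circ k}=\{(w_i)_{i\in[k]}\in W^k:\ \rho(w_{i-1},w_i)\ge p/4\ \forall i\in[k]\}$. Define $f_{w^\star}((w_i)_{i\in[k]})=\big(\prod_{i\in[k]}g(\rho(w_{i-1},w_i))\big)\,g(\rho(w_k,w^\star))$ and $f_{w^\star}(())=g(\rho(w_0,w^\star))$. At each round $t$ the planner either inputs a sequence $S_t=(w^t_i)_{i\in[L_t]}\in W^{\circ L_t}$ with $L_t\in[K]$, or stops ($L_t=0$) and outputs $S_t=(w^t_i)_{i\in[8]}\in W^{\circ 8}$; $N=\min\{t:L_t=0\}$ is the number of actions. After an input it observes $U_t=\mathbb{1}\{\rho(w^t_{L_t-1},w^\star)<p/4\}$, $V_t=\mathbb{1}\{\rho(w^t_{L_t},w^\star)<p/4\}$ and $Z_t$, where $Z_t=0$ unless $V_t=1$ or $L_t=K$, in which case $Z_t\sim\mathrm{Ber}(f_{w^\star}(S_t))$. When the planner stops, it receives final reward $R=f_{w^\star}((w^N_i)_{i\in[k^\star]})$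 with $k^\star=\min\{8,\min\{k:\rho(w^N_k,w^\star)<p/4\}\}$. Expert oracle: partway through inputting a sequence (after a prefix whose last vector is $w$), the planner may query the oracle, which returns the index of the first coordinate where $w$ and $w^\star$ differ, or a special symbol if $w=w^\star$; it may then continue the sequence, as long as the total length stays at most $K$. A planner is sound if for every $w^\star\in W^\star$ its expected final reward $\mathbb{E}[R]$ is within $0.01$ of the maximal achievable final reward (which is at least $f_{w^\star}(())$). *)

theory Defs
  imports "HOL-Probability.Probability"
begin

(* Vectors of {+1,-1}^p are represented as bool lists of length p (True = +1). *)
type_synonym vec = "bool list"

definition cube :: "nat \<Rightarrow> vec set" where
  "cube p = {x. length x = p}"

(* Hamming distance rho(x,y) = (p - x^T y)/2 = number of differing coordinates *)
definition hdist :: "vec \<Rightarrow> vec \<Rightarrow> nat" where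
  "hdist x y = card {i. i < length x \<and> x ! i \<noteq> y ! i}"

definition ones :: "nat \<Rightarrow> vec" where
  "ones p = replicate p True"

definition gfun :: "nat \<Rightarrow> nat \<Rightarrow> real" where
  "gfun p x = 1 - real x / real p"

definition Wstar :: "nat \<Rightarrow> vec set" where
  "Wstar p = {w \<in> cube p. real p / 4 \<le> real (hdist (ones p) w) \<and> real (hdist (ones p) w) \<le> 3 * real p / 4}"

definition close :: "nat \<Rightarrow> vec \<Rightarrow> vec \<Rightarrow> bool" where
  "close p x w \<longleftrightarrow> real (hdist x w) < real p / 4"

(* ws = (w_1,...,w_k), with w_0 = ones p implicit; membership in W^{o k} with k = length ws *)
definition chain_ok :: "nat \<Rightarrow> vec list \<Rightarrow> bool" where
  "chain_ok p ws \<longleftrightarrow> set ws \<subseteq> cube p \<and>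
     (\<forall>i < length ws. real (hdist ((ones p # ws) ! i) (ws ! i)) \<ge> real p / 4)"

definition Wcirc :: "nat \<Rightarrow> nat \<Rightarrow> vec list set" where
  "Wcirc p k = {ws. length ws = k \<and> chain_ok p ws}"

definition fval :: "nat \<Rightarrow> vec \<Rightarrow> vec list \<Rightarrow> real" where
  "fval p wst ws =
     (\<Prod>i<length ws. gfun p (hdist ((ones p # ws) ! i) (ws ! i))) *
     gfun p (hdist (last (ones p # ws)) wst)"

(* k* = min{8, min{k : rho(w_k,wst) < p/4}}, with min of the empty set = infinity *)
definition kstar :: "nat \<Rightarrow> vec \<Rightarrow> vec list \<Rightarrow> nat" where
  "kstar p wst ws =
     (if \<exists>k\<in>{1..8}. close p (ws ! (k - 1)) wst
      then (LEAST k. 1 \<le> k \<and> k \<le> 8 \<and> close p (ws ! (k - 1)) wst) else 8)"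

definition final_reward :: "nat \<Rightarrow> vec \<Rightarrow> vec list \<Rightarrow> real" where
  "final_reward p wst ws = fval p wst (take (kstar p wst ws) ws)"

definition opt_reward :: "nat \<Rightarrow> vec \<Rightarrow> real" where
  "opt_reward p wst = Max (final_reward p wst ` Wcirc p 8)"

(* expert: first (0-based) differing coordinate, None = special symbol (w = wst ) *)
definition expert_answer :: "vec \<Rightarrow> vec \<Rightarrow> nat option" where
  "expert_answer wst w = (if w = wst then None else Some (LEAST i. i < length w \<and> w ! i \<noteq> wst ! i))"

datatype event =
    Ext vec
  | Qry "nat option"
  | Sub bool bool bool      (* sequence submitted (round ends), observations U_t V_t Z_t *)
  | Stp "vec list"

datatype action = AExt vec | AQry | ASub | AStop "vec list"

type_synonym planner = "event list \<Rightarrow> action pmf"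

fun cur_aux :: "vec list \<Rightarrow> event list \<Rightarrow> vec list" where
  "cur_aux acc [] = acc"
| "cur_aux acc (Ext v # h) = cur_aux (acc @ [v]) h"
| "cur_aux acc (Qry _ # h) = cur_aux acc h"
| "cur_aux acc (Sub _ _ _ # h) = cur_aux [] h"
| "cur_aux acc (Stp _ # h) = cur_aux acc h"

definition cur :: "event list \<Rightarrow> vec list" where
  "cur h = cur_aux [] h"

definition stopped :: "event list \<Rightarrow> bool" where
  "stopped h \<longleftrightarrow> (\<exists>ws. Stp ws \<in> set h)"

fun legal :: "nat \<Rightarrow> nat \<Rightarrow> event list \<Rightarrow> action \<Rightarrow> bool" where
  "legal p K h (AExt v) \<longleftrightarrow> length (cur h) < K \<and> chain_ok p (cur h @ [v])"
| "legal p K h AQry \<longleftrightarrow> True"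
| "legal p K h ASub \<longleftrightarrow> cur h \<noteq> []"
| "legal p K h (AStop ws) \<longleftrightarrow> cur h = [] \<and> ws \<in> Wcirc p 8"

definition valid_planner :: "nat \<Rightarrow> nat \<Rightarrow> planner \<Rightarrow> bool" where
  "valid_planner p K P \<longleftrightarrow> (\<forall>h. \<forall>a \<in> set_pmf (P h). legal p K h a)"

definition step :: "nat \<Rightarrow> nat \<Rightarrow> vec \<Rightarrow> planner \<Rightarrow> event list \<Rightarrow> event list pmf" where
  "step p K wst P h =
    (if stopped h then return_pmf h else
     P h \<bind> (\<lambda>a. case a of
        AExt v \<Rightarrow> return_pmf (h @ [Ext v])
      | AQry \<Rightarrow> return_pmf (h @ [Qry (expert_answer wst (last (ones p # cur h)))])
      | ASub \<Rightarrow>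
          (let s = cur h;
               U = close p ((ones p # s) ! (length s - 1)) wst;
               V = close p (last s) wst
           in if V \<or> length s = K
              then map_pmf (\<lambda>z. h @ [Sub U V z]) (bernoulli_pmf (fval p wst s))
              else return_pmf (h @ [Sub U V False]))
      | AStop ws \<Rightarrow> return_pmf (h @ [Stp ws])))"

primrec hist :: "nat \<Rightarrow> nat \<Rightarrow> vec \<Rightarrow> planner \<Rightarrow> nat \<Rightarrow> event list pmf" where
  "hist p K wst P 0 = return_pmf []"
| "hist p K wst P (Suc n) = hist p K wst P n \<bind> step p K wst P"

definition num_queries :: "event list \<Rightarrow> nat" where
  "num_queries h = length (filter (\<lambda>e. case e of Qry _ \<Rightarrow> True | _ \<Rightarrow> False) h)"

definition num_rounds :: "event list \<Rightarrow> nat" where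
  "num_rounds h = length (filter (\<lambda>e. case e of Sub _ _ _ \<Rightarrow> True | Stp _ \<Rightarrow> True | _ \<Rightarrow> False) h)"

(* lower approximation of N: if not yet stopped, at least one more action is to come *)
definition N_approx :: "event list \<Rightarrow> nat" where
  "N_approx h = num_rounds h + (if stopped h then 0 else 1)"

definition expected_N :: "nat \<Rightarrow> nat \<Rightarrow> vec \<Rightarrow> planner \<Rightarrow> ennreal" where
  "expected_N p K wst P = (SUP n. \<integral>\<^sup>+ h. ennreal (real (N_approx h)) \<partial>measure_pmf (hist p K wst P n))"

definition hist_reward :: "nat \<Rightarrow> vec \<Rightarrow> event list \<Rightarrow> real" where
  "hist_reward p wst h = (if stopped h then final_reward p wst (SOME ws. Stp ws \<in> set h) else 0)"

definition expected_R :: "nat \<Rightarrow> nat \<Rightarrow> vec \<Rightarrow> planner \<Rightarrow> real" where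
  "expected_R p K wst P =
     enn2real (SUP n. \<integral>\<^sup>+ h. ennreal (hist_reward p wst h) \<partial>measure_pmf (hist p K wst P n))"

definition sound :: "nat \<Rightarrow> nat \<Rightarrow> planner \<Rightarrow> bool" where
  "sound p K P \<longleftrightarrow> (\<forall>wst \<in> Wstar p. \<bar>expected_R p K wst P - opt_reward p wst\<bar> \<le> 0.01)"

definition query_bounded :: "nat \<Rightarrow> nat \<Rightarrow> planner \<Rightarrow> real \<Rightarrow> bool" where
  "query_bounded p K P Q \<longleftrightarrow>
     (\<forall>wst \<in> Wstar p. \<forall>n. \<forall>h \<in> set_pmf (hist p K wst P n). real (num_queries h) < Q)"

end

theory Submission
  imports Defs
begin


primrec iterp :: "(event list \<Rightarrow> event list pmf) \<Rightarrow> nat \<Rightarrow> event list pmf" where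
  "iterp st 0 = return_pmf []"
| "iterp st (Suc n) = iterp st n \<bind> st"

lemma hist_iterp: "hist p K w P n = iterp (step p K w P) n"
  by (induction n) auto

definition ansset :: "nat \<Rightarrow> nat option set" where
  "ansset p = insert None (Some ` {..<p})"

lemma ansset_fin: "finite (ansset p)" "ansset p \<noteq> {}"
  by (auto simp: ansset_def)

lemma card_ansset: "card (ansset p) = p + 1"
proof -
  have "card (Some ` {..<p}) = p" by (simp add: card_image)
  moreover have "None \<notin> Some ` {..<p}" by auto
  ultimately show ?thesis unfolding ansset_def by simp
qed

definition fstep :: "nat \<Rightarrow> planner \<Rightarrow> event list \<Rightarrow> event list pmf" where
  "fstep p P h = (if stopped h then return_pmf h else
     P h \<bind> (\<lambda>a. case a of
        AExt v \<Rightarrow> return_pmf (h @ [Ext v])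
      | AQry \<Rightarrow> map_pmf (\<lambda>x. h @ [Qry x]) (pmf_of_set (ansset p))
      | ASub \<Rightarrow> return_pmf (h @ [Sub False False False])
      | AStop ws \<Rightarrow> return_pmf (h @ [Stp ws])))"

fun evnull :: "event \<Rightarrow> bool" where
  "evnull (Sub U V Z) = (\<not>U \<and> \<not>V \<and> \<not>Z)" | "evnull _ = True"
definition nullh :: "event list \<Rightarrow> bool" where "nullh h = (\<forall>e\<in>set h. evnull e)"
fun evok :: "nat \<Rightarrow> event \<Rightarrow> bool" where
  "evok p (Qry a) = (a \<in> ansset p)" | "evok p _ = True"
definition aok :: "nat \<Rightarrow> event list \<Rightarrow> bool" where "aok p h = (\<forall>e\<in>set h. evok p e)"
fun isSub :: "event \<Rightarrow> bool" where "isSub (Sub _ _ _) = True" | "isSub _ = False"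
definition subs :: "event list \<Rightarrow> nat" where "subs h = length (filter isSub h)"

lemma cur_aux_snoc: "cur_aux acc (h @ [e]) =
   (case e of Ext v \<Rightarrow> cur_aux acc h @ [v] | Sub _ _ _ \<Rightarrow> [] | _ \<Rightarrow> cur_aux acc h)"
proof (induction h arbitrary: acc)
  case Nil
  then show ?case by (cases e) auto
next
  case (Cons a h)
  then show ?case by (cases a; cases e) auto
qed

lemma cur_snoc: "cur (h @ [e]) =
   (case e of Ext v \<Rightarrow> cur h @ [v] | Sub _ _ _ \<Rightarrow> [] | _ \<Rightarrow> cur h)"
  unfolding cur_def by (rule cur_aux_snoc)

lemma stopped_snoc: "stopped (h @ [e]) = (stopped h \<or> (\<exists>ws. e = Stp ws))"
  unfolding stopped_def by auto

lemma nq_snoc: "num_queries (h @ [e]) = num_queries h + (case e of Qry _ \<Rightarrow> 1 | _ \<Rightarrow> 0)"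
  unfolding num_queries_def by (cases e) auto

lemma subs_snoc: "subs (h @ [e]) = subs h + (if isSub e then 1 else 0)"
  unfolding subs_def by auto

lemma step_supp: "h' \<in> set_pmf (step p K w P h) \<Longrightarrow> h' = h \<or> (\<exists>e. h' = h @ [e])"
  unfolding step_def
  apply (cases "stopped h")
   apply simp
  apply clarsimp
  subgoal for a by (cases a) (auto simp: Let_def split: if_splits)
  done

lemma fstep_supp: "h' \<in> set_pmf (fstep p P h) \<Longrightarrow> h' = h \<or> (\<exists>e. h' = h @ [e])"
  unfolding fstep_def
  apply (cases "stopped h")
   apply simp
  apply clarsimp
  subgoal for a by (cases a) (auto simp: Let_def split: if_splits)
  done

lemma expert_in_ansset:
  assumes "length x = p" "length y = p"
  shows "expert_answer y x \<in> ansset p"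
proof (cases "x = y")
  case True then show ?thesis by (simp add: expert_answer_def ansset_def)
next
  case False
  have ex: "\<exists>i. i < length x \<and> x ! i \<noteq> y ! i"
  proof (rule ccontr)
    assume "\<not> (\<exists>i. i < length x \<and> x ! i \<noteq> y ! i)"
    then have "x = y" using assms by (intro nth_equalityI) auto
    then show False using False by simp
  qed
  have "(LEAST i. i < length x \<and> x ! i \<noteq> y ! i) < length x"
    using LeastI_ex[OF ex] by blast
  then show ?thesis using False assms by (simp add: expert_answer_def ansset_def)
qed

definition Inv :: "nat \<Rightarrow> event list \<Rightarrow> bool" where
  "Inv p h \<longleftrightarrow> chain_ok p (cur h) \<and> aok p h \<and> (\<forall>ws. Stp ws \<in> set h \<longrightarrow> ws \<in> Wcirc p 8)"

lemma ones_cube[simp]: "ones p \<in> cube p" by (simp add: ones_def cube_def)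

lemma chain_ok_Nil[simp]: "chain_ok p []" by (simp add: chain_ok_def)

lemma Inv_step:
  assumes "Inv p h" "valid_planner p K P" "w \<in> cube p" "h' \<in> set_pmf (step p K w P h)"
  shows "Inv p h'"
proof (cases "stopped h")
  case True
  then show ?thesis using assms by (simp add: step_def)
next
  case False
  define K1 where "K1 = (\<lambda>a. case a of
        AExt v \<Rightarrow> return_pmf (h @ [Ext v])
      | AQry \<Rightarrow> return_pmf (h @ [Qry (expert_answer w (last (ones p # cur h)))])
      | ASub \<Rightarrow>
          (let s = cur h;
               U = close p ((ones p # s) ! (length s - 1)) w;
               V = close p (last s) w
           in if V \<or> length s = K
              then map_pmf (\<lambda>z. h @ [Sub U V z]) (bernoulli_pmf (fval p w s))
              else return_pmf (h @ [Sub U V False]))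
      | AStop ws \<Rightarrow> return_pmf (h @ [Stp ws]))"
  have "step p K w P h = P h \<bind> K1" unfolding step_def K1_def using False by simp
  then obtain a where a: "a \<in> set_pmf (P h)" and h': "h' \<in> set_pmf (K1 a)"
    using assms(4) by auto
  have leg: "legal p K h a" using a assms(2) by (auto simp: valid_planner_def)
  show ?thesis
  proof (cases a)
    case (AExt v)
    then show ?thesis using h' leg assms(1) by (auto simp: K1_def Inv_def cur_snoc aok_def)
  next
    case AQry
    have "last (ones p # cur h) \<in> cube p"
    proof (cases "cur h = []")
      case True then show ?thesis by simp
    next
      case False
      then have "last (cur h) \<in> set (cur h)" by simp
      then show ?thesis using False assms(1) by (auto simp: Inv_def chain_ok_def)
    qed
    then have "expert_answer w (last (ones p # cur h)) \<in> ansset p"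
      using assms(3) by (intro expert_in_ansset) (auto simp: cube_def)
    then show ?thesis using h' AQry assms(1) by (auto simp: K1_def Inv_def cur_snoc aok_def simp del: last.simps)
  next
    case ASub
    then show ?thesis using h' assms(1) by (auto simp: K1_def Inv_def cur_snoc aok_def Let_def split: if_splits)
  next
    case (AStop ws)
    then show ?thesis using h' leg assms(1) by (auto simp: K1_def Inv_def cur_snoc aok_def)
  qed
qed

lemma Inv_hist:
  assumes "valid_planner p K P" "w \<in> cube p" "h \<in> set_pmf (hist p K w P n)"
  shows "Inv p h"
  using assms(3)
proof (induction n arbitrary: h)
  case 0
  then show ?case by (simp add: Inv_def aok_def cur_def)
next
  case (Suc n)
  then obtain h0 where "h0 \<in> set_pmf (hist p K w P n)" "h \<in> set_pmf (step p K w P h0)" by auto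
  then show ?case using Suc.IH Inv_step assms(1,2) by blast
qed


lemma nn_int_le_const:
  fixes f :: "'a \<Rightarrow> ennreal"
  assumes "\<And>x. x \<in> set_pmf M \<Longrightarrow> f x \<le> c"
  shows "(\<integral>\<^sup>+x. f x \<partial>measure_pmf M) \<le> c"
proof -
  have "(\<integral>\<^sup>+x. f x \<partial>measure_pmf M) \<le> (\<integral>\<^sup>+x. c \<partial>measure_pmf M)"
    using assms by (intro nn_integral_mono_AE) (auto intro!: AE_pmfI)
  also have "\<dots> = c" by (simp add: measure_pmf.emeasure_space_1)
  finally show ?thesis .
qed

lemma pmf_lower:
  fixes g :: "'a \<Rightarrow> ennreal"
  shows "g x * ennreal (pmf M x) \<le> (\<integral>\<^sup>+y. g y \<partial>measure_pmf M)"
proof -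
  have "(\<integral>\<^sup>+y. g x * indicator {x} y \<partial>measure_pmf M) \<le> (\<integral>\<^sup>+y. g y \<partial>measure_pmf M)"
    by (intro nn_integral_mono) (auto split: split_indicator)
  moreover have "(\<integral>\<^sup>+y. g x * indicator {x} y \<partial>measure_pmf M) = g x * ennreal (pmf M x)"
    by (simp add: emeasure_pmf_single)
  ultimately show ?thesis by simp
qed

abbreviation Wt :: "nat \<Rightarrow> event list \<Rightarrow> ennreal" where
  "Wt p h \<equiv> of_nat ((p+1) ^ num_queries h)"

lemma nullh_snoc[simp]: "nullh (h @ [e]) = (nullh h \<and> evnull e)"
  by (auto simp: nullh_def)

lemma aok_snoc[simp]: "aok p (h @ [e]) = (aok p h \<and> evok p e)"
  by (auto simp: aok_def)

lemma fstep_ge: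
  fixes F :: "event list \<Rightarrow> ennreal"
  assumes F0: "\<And>h. \<not> (nullh h \<and> aok p h) \<Longrightarrow> F h = 0"
  shows "Wt p h * (\<integral>\<^sup>+h'. F h' \<partial>step p K w P h)
          \<le> (\<integral>\<^sup>+h'. Wt p h' * F h' \<partial>fstep p P h)"
proof (cases "stopped h")
  case True then show ?thesis by (simp add: step_def fstep_def)
next
  case False
  define K1 where "K1 = (\<lambda>a. case a of
        AExt v \<Rightarrow> return_pmf (h @ [Ext v])
      | AQry \<Rightarrow> return_pmf (h @ [Qry (expert_answer w (last (ones p # cur h)))])
      | ASub \<Rightarrow>
          (let s = cur h;
               U = close p ((ones p # s) ! (length s - 1)) w;
               V = close p (last s) w
           in if V \<or> length s = K
              then map_pmf (\<lambda>z. h @ [Sub U V z]) (bernoulli_pmf (fval p w s))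
              else return_pmf (h @ [Sub U V False]))
      | AStop ws \<Rightarrow> return_pmf (h @ [Stp ws]))"
  define K2 where "K2 = (\<lambda>a. case a of
        AExt v \<Rightarrow> return_pmf (h @ [Ext v])
      | AQry \<Rightarrow> map_pmf (\<lambda>x. h @ [Qry x]) (pmf_of_set (ansset p))
      | ASub \<Rightarrow> return_pmf (h @ [Sub False False False])
      | AStop ws \<Rightarrow> return_pmf (h @ [Stp ws]))"
  have s1: "step p K w P h = P h \<bind> K1" unfolding step_def K1_def using False by simp
  have s2: "fstep p P h = P h \<bind> K2" unfolding fstep_def K2_def using False by simp
  have pw: "Wt p h * (\<integral>\<^sup>+h'. F h' \<partial>K1 a) \<le> (\<integral>\<^sup>+h'. Wt p h' * F h' \<partial>K2 a)" for a
  proof (cases a)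
    case (AExt v)
    then show ?thesis by (simp add: K1_def K2_def nq_snoc)
  next
    case AQry
    define a0 where "a0 = expert_answer w (last (ones p # cur h))"
    have L: "(\<integral>\<^sup>+h'. F h' \<partial>K1 a) = F (h @ [Qry a0])"
      by (simp add: K1_def AQry a0_def)
    show ?thesis
    proof (cases "a0 \<in> ansset p")
      case False
      then have "F (h @ [Qry a0]) = 0" using F0 by simp
      then show ?thesis using L by simp
    next
      case True
      have "Wt p (h @ [Qry a0]) * F (h @ [Qry a0]) * ennreal (pmf (pmf_of_set (ansset p)) a0)
            \<le> (\<integral>\<^sup>+x. Wt p (h @ [Qry x]) * F (h @ [Qry x]) \<partial>measure_pmf (pmf_of_set (ansset p)))"
        by (rule pmf_lower[where g = "\<lambda>x. Wt p (h @ [Qry x]) * F (h @ [Qry x])"])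
      also have "\<dots> = (\<integral>\<^sup>+h'. Wt p h' * F h' \<partial>K2 a)"
        by (simp add: K2_def AQry)
      finally have *: "Wt p (h @ [Qry a0]) * F (h @ [Qry a0]) * ennreal (pmf (pmf_of_set (ansset p)) a0)
            \<le> (\<integral>\<^sup>+h'. Wt p h' * F h' \<partial>K2 a)" .
      have pmfeq: "pmf (pmf_of_set (ansset p)) a0 = 1 / real (p + 1)"
        using True ansset_fin card_ansset by simp
      have wq: "Wt p (h @ [Qry a0]) = of_nat (p+1) * Wt p h"
        by (simp only: nq_snoc event.case Suc_eq_plus1[symmetric] power_Suc of_nat_mult)
      have "Wt p (h @ [Qry a0]) * F (h @ [Qry a0]) * ennreal (pmf (pmf_of_set (ansset p)) a0)
          = Wt p h * F (h @ [Qry a0]) * (of_nat (p+1) * ennreal (1 / real (p+1)))"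
        by (subst wq, subst pmfeq, simp only: mult.assoc mult.commute mult.left_commute)
      also have "of_nat (p+1) * ennreal (1 / real (p+1)) = 1"
        by (metis ennreal_mult' ennreal_of_nat_eq_real_of_nat nonzero_mult_div_cancel_left
            of_nat_0_le_iff of_nat_eq_0_iff add_eq_0_iff_both_eq_0 one_neq_zero ennreal_1 times_divide_eq_right mult.right_neutral)
      finally show ?thesis using * L by simp
    qed
  next
    case ASub
    have "(\<integral>\<^sup>+h'. F h' \<partial>K1 a) \<le> F (h @ [Sub False False False])"
    proof (rule nn_int_le_const)
      fix h' assume "h' \<in> set_pmf (K1 a)"
      then obtain U V z where h': "h' = h @ [Sub U V z]"
        by (auto simp: K1_def ASub Let_def split: if_splits)
      show "F h' \<le> F (h @ [Sub False False False])"
      proof (cases "U \<or> V \<or> z")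
        case True
        then have "\<not> (nullh h' \<and> aok p h')" using h' by auto
        then have "F h' = 0" by (rule F0)
        then show ?thesis by simp
      next
        case False then show ?thesis using h' by simp
      qed
    qed
    then have "Wt p h * (\<integral>\<^sup>+h'. F h' \<partial>K1 a) \<le> Wt p h * F (h @ [Sub False False False])"
      by (rule mult_left_mono) simp
    then show ?thesis by (simp add: K2_def ASub nq_snoc)
  next
    case (AStop ws)
    then show ?thesis by (simp add: K1_def K2_def nq_snoc)
  qed
  have "Wt p h * (\<integral>\<^sup>+h'. F h' \<partial>step p K w P h) = (\<integral>\<^sup>+a. Wt p h * (\<integral>\<^sup>+h'. F h' \<partial>K1 a) \<partial>P h)"
    by (simp add: s1 nn_integral_cmult)
  also have "\<dots> \<le> (\<integral>\<^sup>+a. (\<integral>\<^sup>+h'. Wt p h' * F h' \<partial>K2 a) \<partial>P h)"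
    by (intro nn_integral_mono pw)
  also have "\<dots> = (\<integral>\<^sup>+h'. Wt p h' * F h' \<partial>fstep p P h)"
    by (simp add: s2)
  finally show ?thesis .
qed

lemma step_ext: "h' \<in> set_pmf (step p K w P h) \<Longrightarrow> \<exists>es. h' = h @ es"
  using step_supp by (metis append.right_neutral)

lemma cmp:
  fixes F :: "event list \<Rightarrow> ennreal"
  assumes F0: "\<And>h. \<not> (nullh h \<and> aok p h) \<Longrightarrow> F h = 0"
  shows "(\<integral>\<^sup>+h. F h \<partial>hist p K w P n) \<le> (\<integral>\<^sup>+h. Wt p h * F h \<partial>iterp (fstep p P) n)"
  using F0
proof (induction n arbitrary: F)
  case 0
  then show ?case by (simp add: num_queries_def)
next
  case (Suc n)
  define G where "G = (\<lambda>h. \<integral>\<^sup>+h'. F h' \<partial>step p K w P h)"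
  have G0: "G h = 0" if "\<not> (nullh h \<and> aok p h)" for h
  proof -
    have "G h = (\<integral>\<^sup>+h'. 0 \<partial>step p K w P h)"
      unfolding G_def
    proof (intro nn_integral_cong_AE AE_pmfI)
      fix h' assume "h' \<in> set_pmf (step p K w P h)"
      then obtain e where "h' = h \<or> h' = h @ [e]" using step_supp by blast
      then show "F h' = 0" using Suc.prems that by auto
    qed
    then show ?thesis by simp
  qed
  have "(\<integral>\<^sup>+h. F h \<partial>hist p K w P (Suc n)) = (\<integral>\<^sup>+h. G h \<partial>hist p K w P n)"
    by (simp add: G_def)
  also have "\<dots> \<le> (\<integral>\<^sup>+h. Wt p h * G h \<partial>iterp (fstep p P) n)"
    using Suc.IH G0 by blast
  also have "\<dots> \<le> (\<integral>\<^sup>+h. (\<integral>\<^sup>+h'. Wt p h' * F h' \<partial>fstep p P h) \<partial>iterp (fstep p P) n)"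
    unfolding G_def by (intro nn_integral_mono fstep_ge Suc.prems) 
  also have "\<dots> = (\<integral>\<^sup>+h. Wt p h * F h \<partial>iterp (fstep p P) (Suc n))"
    by simp
  finally show ?case .
qed

lemma nn_int_ge_const:
  fixes f :: "'a \<Rightarrow> ennreal"
  assumes "\<And>x. x \<in> set_pmf M \<Longrightarrow> c \<le> f x"
  shows "c \<le> (\<integral>\<^sup>+x. f x \<partial>measure_pmf M)"
proof -
  have "(\<integral>\<^sup>+x. c \<partial>measure_pmf M) \<le> (\<integral>\<^sup>+x. f x \<partial>measure_pmf M)"
    using assms by (intro nn_integral_mono_AE) (auto intro!: AE_pmfI)
  then show ?thesis by (simp add: measure_pmf.emeasure_space_1)
qed

lemma tele_up:
  fixes \<Phi> D :: "event list \<Rightarrow> ennreal" and st :: "event list \<Rightarrow> event list pmf"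
  assumes "\<And>h. (\<integral>\<^sup>+h'. \<Phi> h' \<partial>st h) \<le> \<Phi> h + D h"
  shows "(\<integral>\<^sup>+h. \<Phi> h \<partial>iterp st n) \<le> \<Phi> [] + (\<Sum>t<n. \<integral>\<^sup>+h. D h \<partial>iterp st t)"
proof (induction n)
  case 0 then show ?case by simp
next
  case (Suc n)
  have "(\<integral>\<^sup>+h. \<Phi> h \<partial>iterp st (Suc n)) = (\<integral>\<^sup>+h. (\<integral>\<^sup>+h'. \<Phi> h' \<partial>st h) \<partial>iterp st n)" by simp
  also have "\<dots> \<le> (\<integral>\<^sup>+h. \<Phi> h + D h \<partial>iterp st n)"
    by (intro nn_integral_mono assms)
  also have "\<dots> = (\<integral>\<^sup>+h. \<Phi> h \<partial>iterp st n) + (\<integral>\<^sup>+h. D h \<partial>iterp st n)"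
    by (simp add: nn_integral_add)
  also have "\<dots> \<le> \<Phi> [] + (\<Sum>t<n. \<integral>\<^sup>+h. D h \<partial>iterp st t) + (\<integral>\<^sup>+h. D h \<partial>iterp st n)"
    using Suc.IH by (intro add_right_mono)
  also have "\<dots> = \<Phi> [] + (\<Sum>t<Suc n. \<integral>\<^sup>+h. D h \<partial>iterp st t)"
    by (simp add: add.assoc)
  finally show ?case .
qed

lemma tele_down:
  fixes \<Phi> D :: "event list \<Rightarrow> ennreal" and st :: "event list \<Rightarrow> event list pmf"
  assumes "\<And>h. \<Phi> h + D h \<le> (\<integral>\<^sup>+h'. \<Phi> h' \<partial>st h)"
  shows "\<Phi> [] + (\<Sum>t<n. \<integral>\<^sup>+h. D h \<partial>iterp st t) \<le> (\<integral>\<^sup>+h. \<Phi> h \<partial>iterp st n)"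
proof (induction n)
  case 0 then show ?case by simp
next
  case (Suc n)
  have "\<Phi> [] + (\<Sum>t<Suc n. \<integral>\<^sup>+h. D h \<partial>iterp st t)
      = \<Phi> [] + (\<Sum>t<n. \<integral>\<^sup>+h. D h \<partial>iterp st t) + (\<integral>\<^sup>+h. D h \<partial>iterp st n)"
    by (simp add: add.assoc)
  also have "\<dots> \<le> (\<integral>\<^sup>+h. \<Phi> h \<partial>iterp st n) + (\<integral>\<^sup>+h. D h \<partial>iterp st n)"
    using Suc.IH by (intro add_right_mono)
  also have "\<dots> = (\<integral>\<^sup>+h. \<Phi> h + D h \<partial>iterp st n)"
    by (simp add: nn_integral_add)
  also have "\<dots> \<le> (\<integral>\<^sup>+h. (\<integral>\<^sup>+h'. \<Phi> h' \<partial>st h) \<partial>iterp st n)"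
    by (intro nn_integral_mono assms)
  finally show ?case by simp
qed

definition rkern :: "nat \<Rightarrow> nat \<Rightarrow> vec \<Rightarrow> event list \<Rightarrow> action \<Rightarrow> event list pmf" where
  "rkern p K w h = (\<lambda>a. case a of
        AExt v \<Rightarrow> return_pmf (h @ [Ext v])
      | AQry \<Rightarrow> return_pmf (h @ [Qry (expert_answer w (last (ones p # cur h)))])
      | ASub \<Rightarrow>
          (let s = cur h;
               U = close p ((ones p # s) ! (length s - 1)) w;
               V = close p (last s) w
           in if V \<or> length s = K
              then map_pmf (\<lambda>z. h @ [Sub U V z]) (bernoulli_pmf (fval p w s))
              else return_pmf (h @ [Sub U V False]))
      | AStop ws \<Rightarrow> return_pmf (h @ [Stp ws]))"

definition fkern :: "nat \<Rightarrow> event list \<Rightarrow> action \<Rightarrow> event list pmf" where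
  "fkern p h = (\<lambda>a. case a of
        AExt v \<Rightarrow> return_pmf (h @ [Ext v])
      | AQry \<Rightarrow> map_pmf (\<lambda>x. h @ [Qry x]) (pmf_of_set (ansset p))
      | ASub \<Rightarrow> return_pmf (h @ [Sub False False False])
      | AStop ws \<Rightarrow> return_pmf (h @ [Stp ws]))"

lemma step_eq: "\<not> stopped h \<Longrightarrow> step p K w P h = P h \<bind> rkern p K w h"
  unfolding step_def rkern_def by simp

lemma fstep_eq: "\<not> stopped h \<Longrightarrow> fstep p P h = P h \<bind> fkern p h"
  unfolding fstep_def fkern_def by simp

lemma rkern_supp:
  assumes "h' \<in> set_pmf (rkern p K w h a)"
  shows "\<exists>e. h' = h @ [e] \<and> (isSub e \<longleftrightarrow> a = ASub)"
proof (cases a)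
  case (AExt v)
  then have "h' = h @ [Ext v]" using assms by (simp add: rkern_def)
  then show ?thesis using AExt by (intro exI[of _ "Ext v"]) simp
next
  case AQry
  then have "h' = h @ [Qry (expert_answer w (last (ones p # cur h)))]" using assms by (simp add: rkern_def)
  then show ?thesis using AQry by (intro exI[of _ "Qry (expert_answer w (last (ones p # cur h)))"]) simp
next
  case ASub
  then obtain U V z where "h' = h @ [Sub U V z]" using assms
    by (auto simp: rkern_def Let_def split: if_splits)
  then show ?thesis using ASub by (intro exI[of _ "Sub U V z"]) simp
next
  case (AStop ws)
  then have "h' = h @ [Stp ws]" using assms by (simp add: rkern_def)
  then show ?thesis using AStop by (intro exI[of _ "Stp ws"]) simp
qed

lemma fkern_supp:
  assumes "h' \<in> set_pmf (fkern p h a)"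
  shows "\<exists>e. h' = h @ [e] \<and> (isSub e \<longleftrightarrow> a = ASub)"
proof (cases a)
  case (AExt v)
  then have "h' = h @ [Ext v]" using assms by (simp add: fkern_def)
  then show ?thesis using AExt by (intro exI[of _ "Ext v"]) simp
next
  case AQry
  then obtain x where "h' = h @ [Qry x]" using assms by (auto simp: fkern_def)
  then show ?thesis using AQry by (intro exI[of _ "Qry x"]) simp
next
  case ASub
  then have "h' = h @ [Sub False False False]" using assms by (simp add: fkern_def)
  then show ?thesis using ASub by (intro exI[of _ "Sub False False False"]) simp
next
  case (AStop ws)
  then have "h' = h @ [Stp ws]" using assms by (simp add: fkern_def)
  then show ?thesis using AStop by (intro exI[of _ "Stp ws"]) simp
qed

lemma int_indicator_single:
  fixes c :: ennreal
  shows "(\<integral>\<^sup>+a. c * indicator {x} a \<partial>measure_pmf M) = c * ennreal (pmf M x)"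
  by (simp add: emeasure_pmf_single)

definition cntD :: "nat \<Rightarrow> planner \<Rightarrow> event list \<Rightarrow> ennreal" where
  "cntD M P h = (if subs h < M \<and> \<not> stopped h then ennreal (pmf (P h) ASub) else 0)"

lemma count_step_gen:
  fixes kern :: "action \<Rightarrow> event list pmf" and st :: "event list pmf"
  assumes st: "\<not> stopped h \<Longrightarrow> st = P h \<bind> kern"
    and stp: "stopped h \<Longrightarrow> st = return_pmf h"
    and supp: "\<And>a h'. h' \<in> set_pmf (kern a) \<Longrightarrow> \<exists>e. h' = h @ [e] \<and> (isSub e \<longleftrightarrow> a = ASub)"
  shows "of_nat (min (subs h) M) + cntD M P h \<le> (\<integral>\<^sup>+h'. of_nat (min (subs h') M) \<partial>st)"
proof (cases "stopped h")
  case True then show ?thesis using stp by (simp add: cntD_def)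
next
  case False
  define c :: ennreal where "c = (if subs h < M then 1 else 0)"
  have pw: "of_nat (min (subs h) M) + c * indicator {ASub} a \<le> (\<integral>\<^sup>+h'. of_nat (min (subs h') M) \<partial>kern a)" for a
  proof (rule nn_int_ge_const)
    fix h' assume "h' \<in> set_pmf (kern a)"
    then obtain e where e: "h' = h @ [e]" "isSub e \<longleftrightarrow> a = ASub" using supp by blast
    show "of_nat (min (subs h) M) + c * indicator {ASub} a \<le> of_nat (min (subs h') M)"
      using e by (cases "a = ASub") (auto simp: c_def subs_snoc)
  qed
  have "of_nat (min (subs h) M) + cntD M P h = (\<integral>\<^sup>+a. of_nat (min (subs h) M) + c * indicator {ASub} a \<partial>P h)"
    using False by (simp add: nn_integral_add measure_pmf.emeasure_space_1 emeasure_pmf_single cntD_def c_def)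
  also have "\<dots> \<le> (\<integral>\<^sup>+a. (\<integral>\<^sup>+h'. of_nat (min (subs h') M) \<partial>kern a) \<partial>P h)"
    by (intro nn_integral_mono pw)
  also have "\<dots> = (\<integral>\<^sup>+h'. of_nat (min (subs h') M) \<partial>st)"
    using st False by simp
  finally show ?thesis .
qed

lemma count_bound_gen:
  fixes st :: "event list \<Rightarrow> event list pmf"
  assumes "\<And>h. of_nat (min (subs h) M) + cntD M P h \<le> (\<integral>\<^sup>+h'. of_nat (min (subs h') M) \<partial>st h)"
  shows "(\<Sum>t<n. \<integral>\<^sup>+h. cntD M P h \<partial>iterp st t) \<le> of_nat M"
proof -
  have "of_nat (min (subs []) M) + (\<Sum>t<n. \<integral>\<^sup>+h. cntD M P h \<partial>iterp st t)
        \<le> (\<integral>\<^sup>+h. of_nat (min (subs h) M) \<partial>iterp st n)"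
    by (rule tele_down) (rule assms)
  also have "\<dots> \<le> of_nat M"
    by (rule nn_int_le_const) simp
  finally show ?thesis by (simp add: subs_def)
qed

lemma count_real: "(\<Sum>t<n. \<integral>\<^sup>+h. cntD M P h \<partial>hist p K w P t) \<le> of_nat M"
proof -
  have "of_nat (min (subs h) M) + cntD M P h \<le> (\<integral>\<^sup>+h'. of_nat (min (subs h') M) \<partial>step p K w P h)" for h
  proof (rule count_step_gen[where kern = "rkern p K w h"])
    show "\<not> stopped h \<Longrightarrow> step p K w P h = P h \<bind> rkern p K w h" by (rule step_eq)
    show "stopped h \<Longrightarrow> step p K w P h = return_pmf h" by (simp add: step_def)
    show "\<And>a h'. h' \<in> set_pmf (rkern p K w h a) \<Longrightarrow> \<exists>e. h' = h @ [e] \<and> isSub e = (a = ASub)"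
      by (rule rkern_supp)
  qed
  then show ?thesis unfolding hist_iterp by (rule count_bound_gen)
qed

lemma count_fake: "(\<Sum>t<n. \<integral>\<^sup>+h. cntD M P h \<partial>iterp (fstep p P) t) \<le> of_nat M"
proof -
  have "of_nat (min (subs h) M) + cntD M P h \<le> (\<integral>\<^sup>+h'. of_nat (min (subs h') M) \<partial>fstep p P h)" for h
  proof (rule count_step_gen[where kern = "fkern p h"])
    show "\<not> stopped h \<Longrightarrow> fstep p P h = P h \<bind> fkern p h" by (rule fstep_eq)
    show "stopped h \<Longrightarrow> fstep p P h = return_pmf h" by (simp add: fstep_def)
    show "\<And>a h'. h' \<in> set_pmf (fkern p h a) \<Longrightarrow> \<exists>e. h' = h @ [e] \<and> isSub e = (a = ASub)"
      by (rule fkern_supp)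
  qed
  then show ?thesis by (rule count_bound_gen)
qed

lemma hdist_le: "hdist x y \<le> length x"
proof -
  have "{i. i < length x \<and> x ! i \<noteq> y ! i} \<subseteq> {..<length x}" by auto
  from card_mono[OF finite_lessThan this] show ?thesis unfolding hdist_def by simp
qed

lemma hdist_self[simp]: "hdist x x = 0"
  by (simp add: hdist_def)

lemma nth_cons_cube: "i \<le> length ws \<Longrightarrow> set ws \<subseteq> cube p \<Longrightarrow> (ones p # ws) ! i \<in> cube p"
  by (cases i) auto

lemma cube_len: "x \<in> cube p \<Longrightarrow> length x = p" by (simp add: cube_def)

lemma gfun_bounds: "d \<le> p \<Longrightarrow> 0 \<le> gfun p d \<and> gfun p d \<le> 1"
  by (cases "p = 0") (auto simp: gfun_def field_simps)

lemma gfun_34: "0 < p \<Longrightarrow> real p / 4 \<le> real d \<Longrightarrow> gfun p d \<le> 3/4"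
  by (auto simp: gfun_def field_simps)

lemma fval_bounds:
  assumes "chain_ok p ws" "0 < p"
  shows "0 \<le> fval p w ws \<and> fval p w ws \<le> (3/4) ^ length ws"
proof -
  define f where "f i = gfun p (hdist ((ones p # ws) ! i) (ws ! i))" for i
  have sc: "set ws \<subseteq> cube p" using assms(1) by (simp add: chain_ok_def)
  have fi: "0 \<le> f i \<and> f i \<le> 3/4" if "i < length ws" for i
  proof -
    have "(ones p # ws) ! i \<in> cube p" using that sc by (intro nth_cons_cube) auto
    then have "hdist ((ones p # ws) ! i) (ws ! i) \<le> p" using hdist_le cube_len by metis
    moreover have "real p / 4 \<le> real (hdist ((ones p # ws) ! i) (ws ! i))"
      using assms(1) that by (simp add: chain_ok_def)
    ultimately show ?thesis unfolding f_def using gfun_bounds gfun_34 assms(2) by blast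
  qed
  have p1: "0 \<le> (\<Prod>i<length ws. f i)" using fi by (intro prod_nonneg) auto
  have p2: "(\<Prod>i<length ws. f i) \<le> (\<Prod>i<length ws. 3/4)" using fi by (intro prod_mono) auto
  have "last (ones p # ws) \<in> cube p"
    using sc by (cases ws) auto
  then have "hdist (last (ones p # ws)) w \<le> p" using hdist_le cube_len by metis
  then have l: "0 \<le> gfun p (hdist (last (ones p # ws)) w) \<and> gfun p (hdist (last (ones p # ws)) w) \<le> 1"
    by (rule gfun_bounds)
  have "fval p w ws = (\<Prod>i<length ws. f i) * gfun p (hdist (last (ones p # ws)) w)"
    by (simp add: fval_def f_def)
  moreover have "(\<Prod>i<length ws. f i) * gfun p (hdist (last (ones p # ws)) w) \<le> (\<Prod>i<length ws. f i) * 1"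
    using p1 l by (intro mult_left_mono) auto
  moreover have "(\<Prod>i<length ws. f i) \<le> (3/4) ^ length ws" using p2 by simp
  moreover have "0 \<le> (\<Prod>i<length ws. f i) * gfun p (hdist (last (ones p # ws)) w)"
    using p1 l by simp
  ultimately show ?thesis by linarith
qed

fun hitA_aux :: "nat \<Rightarrow> nat \<Rightarrow> event list \<Rightarrow> bool" where
  "hitA_aux M c [] = False"
| "hitA_aux M c (Sub U V Z # h) = (if U \<or> V \<or> Z then c < M else hitA_aux M (Suc c) h)"
| "hitA_aux M c (Ext v # h) = hitA_aux M c h"
| "hitA_aux M c (Qry a # h) = hitA_aux M c h"
| "hitA_aux M c (Stp ws # h) = hitA_aux M c h"

lemma subs_Cons: "subs (e # h) = (if isSub e then Suc (subs h) else subs h)"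
  by (simp add: subs_def)

lemma hitA_snoc: "hitA_aux M c (h @ [e]) = (hitA_aux M c h \<or> (nullh h \<and> c + subs h < M \<and> \<not> evnull e))"
proof (induction h arbitrary: c)
  case Nil
  then show ?case by (cases e) (auto simp: nullh_def subs_def)
next
  case (Cons a h)
  then show ?case by (cases a) (auto simp: nullh_def subs_Cons)
qed

lemma hitA_notnull: "\<not> nullh h \<Longrightarrow> \<not> hitA_aux M c h \<Longrightarrow> M < c + subs h"
proof (induction h arbitrary: c)
  case Nil
  then show ?case by (simp add: nullh_def)
next
  case (Cons a h)
  then show ?case using Cons.IH[of c] Cons.IH[of "Suc c"] by (cases a) (auto simp: nullh_def subs_Cons split: if_splits)
qed

definition ind :: "bool \<Rightarrow> ennreal" where "ind b = (if b then 1 else 0)"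

definition Ux :: "nat \<Rightarrow> event list \<Rightarrow> vec" where
  "Ux p h = (ones p # cur h) ! (length (cur h) - 1)"

definition hitD :: "nat \<Rightarrow> nat \<Rightarrow> nat \<Rightarrow> vec \<Rightarrow> planner \<Rightarrow> event list \<Rightarrow> ennreal" where
  "hitD p K M w P h = (if \<not> stopped h \<and> nullh h \<and> subs h < M \<and> cur h \<noteq> [] then
      (if chain_ok p (cur h) then ennreal (pmf (P h) ASub) *
          (ind (close p (Ux p h) w) + ind (close p (last (cur h)) w) + ennreal ((3/4) ^ K))
       else \<top>) else 0)"

lemma nonsub_evnull: "\<not> isSub e \<Longrightarrow> evnull e"
  by (cases e) auto



lemma hit_step:
  assumes valid: "valid_planner p K P" and p0: "0 < p"
  shows "(\<integral>\<^sup>+h'. ind (hitA_aux M 0 h') \<partial>step p K w P h) \<le> ind (hitA_aux M 0 h) + hitD p K M w P h"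
proof (cases "stopped h")
  case True then show ?thesis by (simp add: step_def)
next
  case ns: False
  show ?thesis
  proof (cases "hitA_aux M 0 h")
    case True
    have "(\<integral>\<^sup>+h'. ind (hitA_aux M 0 h') \<partial>step p K w P h) \<le> 1"
      by (rule nn_int_le_const) (simp add: ind_def)
    then show ?thesis using True by (simp add: ind_def add_increasing2)
  next
    case nh: False
    show ?thesis
    proof (cases "nullh h \<and> subs h < M")
      case False
      have "(\<integral>\<^sup>+h'. ind (hitA_aux M 0 h') \<partial>step p K w P h) \<le> 0"
      proof (rule nn_int_le_const)
        fix h' assume "h' \<in> set_pmf (step p K w P h)"
        then have "h' = h \<or> (\<exists>e. h' = h @ [e])" by (rule step_supp)
        then show "ind (hitA_aux M 0 h') \<le> 0" using nh False by (auto simp: ind_def hitA_snoc)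
      qed
      then show ?thesis by simp
    next
      case nullsub: True
      show ?thesis
      proof (cases "cur h = []")
        case True
        have "(\<integral>\<^sup>+h'. ind (hitA_aux M 0 h') \<partial>step p K w P h) \<le> 0"
        proof (rule nn_int_le_const)
          fix h' assume "h' \<in> set_pmf (step p K w P h)"
          then obtain a where a: "a \<in> set_pmf (P h)" "h' \<in> set_pmf (rkern p K w h a)"
            using step_eq[OF ns] by auto
          have "legal p K h a" using a(1) valid by (auto simp: valid_planner_def)
          then have "a \<noteq> ASub" using True by auto
          then obtain e where "h' = h @ [e]" "\<not> isSub e" using rkern_supp[OF a(2)] by blast
          then show "ind (hitA_aux M 0 h') \<le> 0" using nh by (auto simp: ind_def hitA_snoc nonsub_evnull)
        qed
        then show ?thesis by simp
      next
        case cne: False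
        show ?thesis
        proof (cases "chain_ok p (cur h)")
          case False
          then show ?thesis using ns nullsub cne by (simp add: hitD_def)
        next
          case chain: True
          define c where "c = ind (close p (Ux p h) w) + ind (close p (last (cur h)) w) + ennreal ((3/4) ^ K)"
          have pw: "(\<integral>\<^sup>+h'. ind (hitA_aux M 0 h') \<partial>rkern p K w h a) \<le> c * indicator {ASub} a" for a
          proof (cases "a = ASub")
            case False
            have "(\<integral>\<^sup>+h'. ind (hitA_aux M 0 h') \<partial>rkern p K w h a) \<le> 0"
            proof (rule nn_int_le_const)
              fix h' assume "h' \<in> set_pmf (rkern p K w h a)"
              then obtain e where "h' = h @ [e]" "\<not> isSub e" using rkern_supp False by blast
              then show "ind (hitA_aux M 0 h') \<le> 0" using nh by (auto simp: ind_def hitA_snoc nonsub_evnull)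
            qed
            then show ?thesis by simp
          next
            case aS: True
            define s where "s = cur h"
            define U where "U = close p ((ones p # s) ! (length s - 1)) w"
            define V where "V = close p (last s) w"
            have hs: "hitA_aux M 0 (h @ [Sub U V z]) = (U \<or> V \<or> z)" for z
              using nh nullsub by (simp add: hitA_snoc)
            have rk: "rkern p K w h a = (if V \<or> length s = K
              then map_pmf (\<lambda>z. h @ [Sub U V z]) (bernoulli_pmf (fval p w s))
              else return_pmf (h @ [Sub U V False]))"
              by (simp add: rkern_def aS s_def U_def V_def Let_def)
            have cU: "ind U \<le> c" and cV: "ind V \<le> c" and cK: "ennreal ((3/4)^K) \<le> c"
              by (simp_all add: c_def U_def V_def Ux_def s_def add_increasing add_increasing2)
            have "(\<integral>\<^sup>+h'. ind (hitA_aux M 0 h') \<partial>rkern p K w h a) \<le> c"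
            proof (cases "U \<or> V")
              case True
              have "(\<integral>\<^sup>+h'. ind (hitA_aux M 0 h') \<partial>rkern p K w h a) \<le> 1"
                by (rule nn_int_le_const) (simp add: ind_def)
              moreover have "1 \<le> c" using True cU cV by (auto simp: ind_def)
              ultimately show ?thesis by simp
            next
              case nUV: False
              show ?thesis
              proof (cases "length s = K")
                case True
                have fb: "0 \<le> fval p w s \<and> fval p w s \<le> (3/4) ^ K"
                  using fval_bounds[OF _ p0, of s w] chain True by (simp add: s_def)
                have f1: "fval p w s \<le> 1"
                proof -
                  have "(3/4::real)^K \<le> 1" by (rule power_le_one) auto
                  then show ?thesis using fb by linarith
                qed
                have hT: "hitA_aux M 0 (h @ [Sub False False True])"
                  using hs[of True] nUV by auto
                have hF: "\<not> hitA_aux M 0 (h @ [Sub False False False])"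
                  using hs[of False] nUV by auto
                have "(\<integral>\<^sup>+h'. ind (hitA_aux M 0 h') \<partial>rkern p K w h a) = ennreal (fval p w s)"
                  using nUV True fb f1 by (simp add: rk hT hF ind_def)
                also have "\<dots> \<le> ennreal ((3/4)^K)" using fb by (simp add: ennreal_leI)
                finally show ?thesis using cK by simp
              next
                case False
                have hF: "\<not> hitA_aux M 0 (h @ [Sub False False False])"
                  using hs[of False] nUV by auto
                show ?thesis using nUV False by (simp add: rk hF ind_def)
              qed
            qed
            then show ?thesis using aS by simp
          qed
          have "(\<integral>\<^sup>+h'. ind (hitA_aux M 0 h') \<partial>step p K w P h)
              = (\<integral>\<^sup>+a. (\<integral>\<^sup>+h'. ind (hitA_aux M 0 h') \<partial>rkern p K w h a) \<partial>P h)"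
            by (simp add: step_eq[OF ns])
          also have "\<dots> \<le> (\<integral>\<^sup>+a. c * indicator {ASub} a \<partial>P h)"
            by (intro nn_integral_mono pw)
          also have "\<dots> = c * ennreal (pmf (P h) ASub)" by (rule int_indicator_single)
          also have "\<dots> = hitD p K M w P h"
            using ns nullsub cne chain by (simp add: hitD_def c_def mult.commute)
          finally show ?thesis by (simp add: add_increasing)
        qed
      qed
    qed
  qed
qed


definition outws :: "event list \<Rightarrow> vec list" where "outws h = (SOME ws. Stp ws \<in> set h)"

definition Eout :: "nat \<Rightarrow> vec \<Rightarrow> event list \<Rightarrow> bool" where
  "Eout p w h \<longleftrightarrow> stopped h \<and> (\<exists>k<8. close p (outws h ! k) w)"

definition Fo :: "nat \<Rightarrow> nat \<Rightarrow> vec \<Rightarrow> event list \<Rightarrow> ennreal" where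
  "Fo p Q0 w h = ind (nullh h \<and> aok p h \<and> num_queries h \<le> Q0 \<and>
      (\<forall>ws. Stp ws \<in> set h \<longrightarrow> ws \<in> Wcirc p 8) \<and> Eout p w h)"

definition HD1 :: "nat \<Rightarrow> nat \<Rightarrow> nat \<Rightarrow> vec \<Rightarrow> planner \<Rightarrow> event list \<Rightarrow> ennreal" where
  "HD1 p Q0 M w P h = ind (nullh h \<and> aok p h \<and> num_queries h \<le> Q0 \<and> chain_ok p (cur h) \<and>
      cur h \<noteq> [] \<and> \<not> stopped h \<and> subs h < M) * ennreal (pmf (P h) ASub) *
      (ind (close p (Ux p h) w) + ind (close p (last (cur h)) w))"

definition bcount :: "nat \<Rightarrow> nat" where
  "bcount p = card {A. A \<subseteq> {..<p} \<and> 4 * card A < p}"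

lemma finite_cube: "finite (cube p)"
proof -
  have "cube p = {xs. set xs \<subseteq> (UNIV :: bool set) \<and> length xs = p}" by (auto simp: cube_def)
  then show ?thesis using finite_lists_length_eq[of "UNIV :: bool set" p] by simp
qed

lemma close_iff: "close p x w \<longleftrightarrow> 4 * hdist x w < p"
proof -
  have "close p x w \<longleftrightarrow> real (4 * hdist x w) < real p" by (simp add: close_def field_simps)
  also have "\<dots> \<longleftrightarrow> 4 * hdist x w < p" by (rule of_nat_less_iff)
  finally show ?thesis .
qed

lemma ball_card:
  assumes x: "x \<in> cube p"
  shows "card {w \<in> cube p. close p x w} \<le> bcount p"
proof -
  define f where "f w = {i. i < p \<and> x ! i \<noteq> w ! i}" for w :: vec
  have hd: "hdist x w = card (f w)" for w
    using x by (simp add: hdist_def f_def cube_def)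
  have inj: "inj_on f {w \<in> cube p. close p x w}"
  proof (rule inj_onI)
    fix w1 w2 assume w1: "w1 \<in> {w \<in> cube p. close p x w}" and w2: "w2 \<in> {w \<in> cube p. close p x w}"
      and eq: "f w1 = f w2"
    show "w1 = w2"
    proof (rule nth_equalityI)
      show "length w1 = length w2" using w1 w2 by (simp add: cube_def)
      fix i assume "i < length w1"
      then have ip: "i < p" using w1 by (simp add: cube_def)
      have "(x ! i \<noteq> w1 ! i) = (x ! i \<noteq> w2 ! i)"
        using eq ip unfolding f_def by blast
      then show "w1 ! i = w2 ! i" by auto
    qed
  qed
  have sub: "f ` {w \<in> cube p. close p x w} \<subseteq> {A. A \<subseteq> {..<p} \<and> 4 * card A < p}"
  proof
    fix A assume "A \<in> f ` {w \<in> cube p. close p x w}"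
    then obtain w where w: "close p x w" "A = f w" by auto
    have "A \<subseteq> {..<p}" using w(2) by (auto simp: f_def)
    moreover have "4 * card A < p" using w close_iff hd by metis
    ultimately show "A \<in> {A. A \<subseteq> {..<p} \<and> 4 * card A < p}" by simp
  qed
  have fin: "finite {A. A \<subseteq> {..<p} \<and> 4 * card A < p}"
    by (rule finite_subset[of _ "Pow {..<p}"]) auto
  show ?thesis unfolding bcount_def
    using card_inj_on_le[OF inj sub fin] .
qed

lemma sum_ind_eq: "finite S \<Longrightarrow> (\<Sum>w\<in>S. ind (Q w)) = of_nat (card {w\<in>S. Q w})"
proof -
  assume fin: "finite S"
  have "(\<Sum>w\<in>S. ind (Q w)) = (\<Sum>w\<in>S \<inter> {w. Q w}. 1) + (\<Sum>w\<in>S \<inter> - {w. Q w}. 0)"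
    unfolding ind_def by (rule sum.If_cases[OF fin])
  also have "\<dots> = of_nat (card (S \<inter> {w. Q w}))" by simp
  also have "S \<inter> {w. Q w} = {w\<in>S. Q w}" by auto
  finally show ?thesis .
qed

lemma sum_ind_close:
  assumes "finite S" "S \<subseteq> cube p" "x \<in> cube p"
  shows "(\<Sum>w\<in>S. ind (close p x w)) \<le> of_nat (bcount p)"
proof -
  have "card {w\<in>S. close p x w} \<le> card {w \<in> cube p. close p x w}"
    using assms(2) by (intro card_mono) (auto intro: finite_subset[OF _ finite_cube])
  also have "\<dots> \<le> bcount p" by (rule ball_card[OF assms(3)])
  finally show ?thesis using sum_ind_eq[OF assms(1)] by simp
qed

lemma stopped_outws: "stopped h \<Longrightarrow> Stp (outws h) \<in> set h"
  unfolding stopped_def outws_def by (rule someI_ex)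

lemma Fo_sum:
  assumes "finite S" "S \<subseteq> cube p"
  shows "(\<Sum>w\<in>S. Fo p Q0 w h) \<le> 8 * of_nat (bcount p)"
proof (cases "nullh h \<and> aok p h \<and> num_queries h \<le> Q0 \<and> (\<forall>ws. Stp ws \<in> set h \<longrightarrow> ws \<in> Wcirc p 8) \<and> stopped h")
  case False
  then have "Fo p Q0 w h = 0" for w by (auto simp: Fo_def ind_def Eout_def)
  then show ?thesis by simp
next
  case True
  then have ow: "outws h \<in> Wcirc p 8" using stopped_outws by blast
  then have oc: "outws h ! k \<in> cube p" if "k < 8" for k
    using that by (auto simp: Wcirc_def chain_ok_def)
  have "Fo p Q0 w h \<le> (\<Sum>k<8. ind (close p (outws h ! k) w))" for w
  proof (cases "Eout p w h")
    case True
    then obtain k where k: "k < 8" "close p (outws h ! k) w" by (auto simp: Eout_def)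
    have "Fo p Q0 w h \<le> 1" by (simp add: Fo_def ind_def)
    also have "1 = ind (close p (outws h ! k) w)" using k by (simp add: ind_def)
    also have "\<dots> \<le> (\<Sum>k<8. ind (close p (outws h ! k) w))"
      using k by (intro member_le_sum) auto
    finally show ?thesis .
  next
    case False then show ?thesis by (simp add: Fo_def ind_def)
  qed
  then have "(\<Sum>w\<in>S. Fo p Q0 w h) \<le> (\<Sum>w\<in>S. \<Sum>k<8. ind (close p (outws h ! k) w))"
    by (intro sum_mono)
  also have "\<dots> = (\<Sum>k<8. \<Sum>w\<in>S. ind (close p (outws h ! k) w))" by (rule sum.swap)
  also have "\<dots> \<le> (\<Sum>k<(8::nat). of_nat (bcount p))"
    using oc assms by (intro sum_mono sum_ind_close) auto
  finally show ?thesis by simp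
qed

lemma HD1_sum:
  assumes "finite S" "S \<subseteq> cube p"
  shows "(\<Sum>w\<in>S. HD1 p Q0 M w P h) \<le> 2 * of_nat (bcount p) * cntD M P h"
proof (cases "nullh h \<and> aok p h \<and> num_queries h \<le> Q0 \<and> chain_ok p (cur h) \<and>
      cur h \<noteq> [] \<and> \<not> stopped h \<and> subs h < M")
  case False
  have "HD1 p Q0 M w P h = 0" for w unfolding HD1_def ind_def by (subst if_not_P[OF False]) simp
  then show ?thesis by simp
next
  case True
  have sc: "set (cur h) \<subseteq> cube p" using True by (simp add: chain_ok_def)
  have u: "Ux p h \<in> cube p" unfolding Ux_def using sc by (intro nth_cons_cube) auto
  have l: "last (cur h) \<in> cube p" using sc True by auto
  have e: "HD1 p Q0 M w P h = ennreal (pmf (P h) ASub) * (ind (close p (Ux p h) w) + ind (close p (last (cur h)) w))" for w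
    unfolding HD1_def by (subst (1) ind_def, subst if_P[OF True]) simp
  have "(\<Sum>w\<in>S. HD1 p Q0 M w P h) = ennreal (pmf (P h) ASub) *
      ((\<Sum>w\<in>S. ind (close p (Ux p h) w)) + (\<Sum>w\<in>S. ind (close p (last (cur h)) w)))"
    unfolding e by (simp only: sum.distrib[symmetric] sum_distrib_left)
  also have "\<dots> \<le> ennreal (pmf (P h) ASub) * (of_nat (bcount p) + of_nat (bcount p))"
    by (intro mult_left_mono add_mono sum_ind_close assms u l) simp
  also have "\<dots> = 2 * of_nat (bcount p) * cntD M P h"
    using True by (simp add: cntD_def mult_2 algebra_simps)
  finally show ?thesis .
qed

lemma hitD_le:
  assumes "Inv p h"
  shows "hitD p K M w P h \<le> HD1 p Q0 M w P h + cntD M P h * ennreal ((3/4)^K) + ind (num_queries h > Q0 \<and> \<not> stopped h \<and> nullh h \<and> subs h < M \<and> cur h \<noteq> []) * \<top>"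
proof (cases "\<not> stopped h \<and> nullh h \<and> subs h < M \<and> cur h \<noteq> []")
  case False
  then show ?thesis by (auto simp: hitD_def)
next
  case True
  have ch: "chain_ok p (cur h)" "aok p h" using assms by (auto simp: Inv_def)
  show ?thesis
  proof (cases "num_queries h \<le> Q0")
    case False then show ?thesis using True by (simp add: ind_def)
  next
    case q: True
    have "hitD p K M w P h = ennreal (pmf (P h) ASub) * (ind (close p (Ux p h) w) + ind (close p (last (cur h)) w))
        + ennreal (pmf (P h) ASub) * ennreal ((3/4)^K)"
      using True ch by (simp add: hitD_def distrib_left)
    also have "\<dots> = HD1 p Q0 M w P h + cntD M P h * ennreal ((3/4)^K)"
      using True ch q by (simp add: HD1_def cntD_def ind_def)
    finally show ?thesis by (simp add: add_increasing2)
  qed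
qed

lemma subs_le_rounds: "subs h \<le> num_rounds h"
  unfolding subs_def num_rounds_def
  by (induction h) (auto split: event.splits)

lemma decomp:
  assumes "Inv p h" "num_queries h \<le> Q0"
  shows "ind (Eout p w h) \<le> ind (hitA_aux M 0 h) + ind (M \<le> num_rounds h) + Fo p Q0 w h"
proof (cases "nullh h")
  case True
  then have "Fo p Q0 w h = ind (Eout p w h)" using assms by (simp add: Fo_def Inv_def)
  then show ?thesis by (simp add: add_increasing)
next
  case False
  show ?thesis
  proof (cases "hitA_aux M 0 h")
    case True
    then show ?thesis by (simp add: ind_def add_increasing2 add.assoc)
  next
    case nh: False
    have "M < subs h" using hitA_notnull[OF False nh] by simp
    then have "M \<le> num_rounds h" using subs_le_rounds[of h] by linarith
    then have "ind (Eout p w h) \<le> ind (M \<le> num_rounds h)" by (simp add: ind_def)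
    then show ?thesis by (metis add.commute add_increasing2 zero_le le_iff_add add.assoc)
  qed
qed


lemma chain_ok_take:
  assumes c: "chain_ok p ws"
  shows "chain_ok p (take m ws)"
proof -
  have "set (take m ws) \<subseteq> cube p" using c set_take_subset[of m ws] by (auto simp: chain_ok_def)
  moreover have "real (hdist ((ones p # take m ws) ! i) (take m ws ! i)) \<ge> real p / 4"
    if i: "i < length (take m ws)" for i
  proof -
    have i1: "i < m" "i < length ws" using i by auto
    have e1: "take m ws ! i = ws ! i" using i1 by simp
    have e2: "(ones p # take m ws) ! i = (ones p # ws) ! i" using i1 by (cases i) auto
    show ?thesis using c i1 unfolding e1 e2 chain_ok_def by auto
  qed
  ultimately show ?thesis by (simp add: chain_ok_def)
qed

lemma outws_Wcirc: "Inv p h \<Longrightarrow> stopped h \<Longrightarrow> outws h \<in> Wcirc p 8"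
  using stopped_outws by (auto simp: Inv_def)

lemma reward_real:
  assumes inv: "Inv p h" and p0: "0 < p"
  shows "hist_reward p w h \<le> (if Eout p w h then 1 else 0) + (3/4)^8 \<and> 0 \<le> hist_reward p w h"
proof (cases "stopped h")
  case False then show ?thesis by (simp add: hist_reward_def)
next
  case True
  define ws where "ws = outws h"
  have hr: "hist_reward p w h = final_reward p w ws"
    using True by (simp add: hist_reward_def ws_def outws_def)
  have wc: "ws \<in> Wcirc p 8" using outws_Wcirc[OF inv True] by (simp add: ws_def)
  then have ch: "chain_ok p ws" "length ws = 8" by (auto simp: Wcirc_def)
  have fb: "0 \<le> fval p w (take m ws) \<and> fval p w (take m ws) \<le> (3/4) ^ length (take m ws)" for m
    by (rule fval_bounds[OF chain_ok_take[OF ch(1)] p0])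
  have le1: "(3/4::real) ^ n \<le> 1" for n by (rule power_le_one) auto
  show ?thesis
  proof (cases "\<exists>k\<in>{1..8}. close p (ws ! (k - 1)) w")
    case True
    then obtain k where "k \<in> {1..8}" "close p (ws ! (k - 1)) w" by blast
    then have E: "Eout p w h" using \<open>stopped h\<close> by (auto simp: Eout_def ws_def intro!: exI[of _ "k - 1"])
    have f1: "final_reward p w ws \<le> 1" unfolding final_reward_def using fb le1 by (meson order_trans)
    have f0: "0 \<le> final_reward p w ws" unfolding final_reward_def using fb by blast
    have e: "(1::real) \<le> 1 + (3/4)^8" by simp
    have "final_reward p w ws \<le> 1 + (3/4)^8" using f1 e by (rule order_trans)
    then show ?thesis using E hr f0 by simp
  next
    case False
    then have "kstar p w ws = 8" by (simp add: kstar_def)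
    then have "final_reward p w ws = fval p w ws" using ch by (simp add: final_reward_def)
    moreover have "0 \<le> fval p w ws \<and> fval p w ws \<le> (3/4) ^ 8"
      using fb[of 8] ch by simp
    ultimately show ?thesis using hr by (simp add: add_increasing)
  qed
qed

lemma reward_enn:
  assumes "Inv p h" "0 < p"
  shows "ennreal (hist_reward p w h) \<le> ind (Eout p w h) + ennreal ((3/4)^8)"
proof -
  have "ennreal (hist_reward p w h) \<le> ennreal ((if Eout p w h then 1 else 0) + (3/4)^8)"
    using reward_real[OF assms, of w] by (intro ennreal_leI) simp
  also have "\<dots> = ind (Eout p w h) + ennreal ((3/4)^8)"
    by (simp add: ind_def ennreal_plus)
  finally show ?thesis .
qed

lemma markov:
  assumes M: "0 < M"
  shows "(\<integral>\<^sup>+h. ind (M \<le> num_rounds h) \<partial>measure_pmf D)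
      \<le> ennreal (1 / real M) * (\<integral>\<^sup>+h. ennreal (real (N_approx h)) \<partial>measure_pmf D)"
proof -
  have "ind (M \<le> num_rounds h) \<le> ennreal (1 / real M) * ennreal (real (N_approx h))" for h
  proof (cases "M \<le> num_rounds h")
    case True
    then have "real M \<le> real (N_approx h)" by (simp add: N_approx_def)
    then have "1 \<le> 1 / real M * real (N_approx h)" using M by (simp add: field_simps)
    then have "ennreal 1 \<le> ennreal (1 / real M * real (N_approx h))" by (rule ennreal_leI)
    also have "ennreal (1 / real M * real (N_approx h)) = ennreal (1 / real M) * ennreal (real (N_approx h))"
      by (rule ennreal_mult) auto
    finally show ?thesis using True by (simp add: ind_def)
  next
    case False then show ?thesis by (simp add: ind_def)
  qed
  then have "(\<integral>\<^sup>+h. ind (M \<le> num_rounds h) \<partial>measure_pmf D)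
      \<le> (\<integral>\<^sup>+h. ennreal (1 / real M) * ennreal (real (N_approx h)) \<partial>measure_pmf D)"
    by (intro nn_integral_mono)
  also have "\<dots> = ennreal (1 / real M) * (\<integral>\<^sup>+h. ennreal (real (N_approx h)) \<partial>measure_pmf D)"
    by (simp add: nn_integral_cmult)
  finally show ?thesis .
qed

lemma cmpQ:
  fixes F :: "event list \<Rightarrow> ennreal"
  assumes F0: "\<And>h. \<not> (nullh h \<and> aok p h \<and> num_queries h \<le> Q0) \<Longrightarrow> F h = 0"
  shows "(\<integral>\<^sup>+h. F h \<partial>hist p K w P n) \<le> of_nat ((p+1)^Q0) * (\<integral>\<^sup>+h. F h \<partial>iterp (fstep p P) n)"
proof -
  have "(\<integral>\<^sup>+h. F h \<partial>hist p K w P n) \<le> (\<integral>\<^sup>+h. Wt p h * F h \<partial>iterp (fstep p P) n)"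
    by (rule cmp) (use F0 in auto)
  also have "\<dots> \<le> (\<integral>\<^sup>+h. of_nat ((p+1)^Q0) * F h \<partial>iterp (fstep p P) n)"
  proof (intro nn_integral_mono)
    fix h
    show "Wt p h * F h \<le> of_nat ((p+1)^Q0) * F h"
    proof (cases "nullh h \<and> aok p h \<and> num_queries h \<le> Q0")
      case True
      then have "(p+1)^num_queries h \<le> (p+1)^Q0" by (intro power_increasing) auto
      then have "Wt p h \<le> of_nat ((p+1)^Q0)" by (simp only: of_nat_le_iff)
      then show ?thesis by (rule mult_right_mono) simp
    next
      case False then show ?thesis using F0 by simp
    qed
  qed
  also have "\<dots> = of_nat ((p+1)^Q0) * (\<integral>\<^sup>+h. F h \<partial>iterp (fstep p P) n)"
    by (simp add: nn_integral_cmult)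
  finally show ?thesis .
qed

lemma per_w:
  assumes valid: "valid_planner p K P" and p0: "0 < p" and w: "w \<in> cube p"
    and qb: "\<And>n h. h \<in> set_pmf (hist p K w P n) \<Longrightarrow> num_queries h \<le> Q0"
    and M: "0 < M"
  shows "(\<integral>\<^sup>+h. ennreal (hist_reward p w h) \<partial>hist p K w P n)
     \<le> (\<Sum>t<n. of_nat ((p+1)^Q0) * (\<integral>\<^sup>+h. HD1 p Q0 M w P h \<partial>iterp (fstep p P) t))
       + ennreal ((3/4)^K) * of_nat M
       + ennreal (1 / real M) * (\<integral>\<^sup>+h. ennreal (real (N_approx h)) \<partial>hist p K w P n)
       + of_nat ((p+1)^Q0) * (\<integral>\<^sup>+h. Fo p Q0 w h \<partial>iterp (fstep p P) n)
       + ennreal ((3/4)^8)"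
proof -
  let ?W = "of_nat ((p+1)^Q0) :: ennreal"
  have inv: "Inv p h" if "h \<in> set_pmf (hist p K w P m)" for h m
    using Inv_hist[OF valid w that] .
  have I1: "(\<integral>\<^sup>+h. ennreal (hist_reward p w h) \<partial>hist p K w P n)
      \<le> (\<integral>\<^sup>+h. ind (Eout p w h) \<partial>hist p K w P n) + ennreal ((3/4)^8)"
  proof -
    have "(\<integral>\<^sup>+h. ennreal (hist_reward p w h) \<partial>hist p K w P n)
      \<le> (\<integral>\<^sup>+h. ind (Eout p w h) + ennreal ((3/4)^8) \<partial>hist p K w P n)"
      by (intro nn_integral_mono_AE AE_pmfI reward_enn inv p0)
    also have "\<dots> = (\<integral>\<^sup>+h. ind (Eout p w h) \<partial>hist p K w P n) + ennreal ((3/4)^8)"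
      by (simp add: nn_integral_add measure_pmf.emeasure_space_1)
    finally show ?thesis .
  qed
  have I2: "(\<integral>\<^sup>+h. ind (Eout p w h) \<partial>hist p K w P n)
      \<le> (\<integral>\<^sup>+h. ind (hitA_aux M 0 h) \<partial>hist p K w P n)
        + (\<integral>\<^sup>+h. ind (M \<le> num_rounds h) \<partial>hist p K w P n)
        + (\<integral>\<^sup>+h. Fo p Q0 w h \<partial>hist p K w P n)"
  proof -
    have "(\<integral>\<^sup>+h. ind (Eout p w h) \<partial>hist p K w P n)
      \<le> (\<integral>\<^sup>+h. ind (hitA_aux M 0 h) + ind (M \<le> num_rounds h) + Fo p Q0 w h \<partial>hist p K w P n)"
      by (intro nn_integral_mono_AE AE_pmfI decomp inv qb)
    also have "\<dots> = (\<integral>\<^sup>+h. ind (hitA_aux M 0 h) \<partial>hist p K w P n)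
        + (\<integral>\<^sup>+h. ind (M \<le> num_rounds h) \<partial>hist p K w P n)
        + (\<integral>\<^sup>+h. Fo p Q0 w h \<partial>hist p K w P n)"
      by (simp add: nn_integral_add)
    finally show ?thesis .
  qed
  have I3: "(\<integral>\<^sup>+h. ind (hitA_aux M 0 h) \<partial>hist p K w P n)
      \<le> (\<Sum>t<n. \<integral>\<^sup>+h. hitD p K M w P h \<partial>hist p K w P t)"
  proof -
    have "(\<integral>\<^sup>+h. ind (hitA_aux M 0 h) \<partial>iterp (step p K w P) n)
      \<le> ind (hitA_aux M 0 []) + (\<Sum>t<n. \<integral>\<^sup>+h. hitD p K M w P h \<partial>iterp (step p K w P) t)"
      by (rule tele_up) (rule hit_step[OF valid p0])
    then show ?thesis by (simp add: hist_iterp ind_def)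
  qed
  have I4: "(\<integral>\<^sup>+h. hitD p K M w P h \<partial>hist p K w P t)
      \<le> ?W * (\<integral>\<^sup>+h. HD1 p Q0 M w P h \<partial>iterp (fstep p P) t)
        + (\<integral>\<^sup>+h. cntD M P h \<partial>hist p K w P t) * ennreal ((3/4)^K)" for t
  proof -
    have "(\<integral>\<^sup>+h. hitD p K M w P h \<partial>hist p K w P t)
      \<le> (\<integral>\<^sup>+h. HD1 p Q0 M w P h + cntD M P h * ennreal ((3/4)^K) \<partial>hist p K w P t)"
    proof (intro nn_integral_mono_AE AE_pmfI)
      fix h assume h: "h \<in> set_pmf (hist p K w P t)"
      have "hitD p K M w P h \<le> HD1 p Q0 M w P h + cntD M P h * ennreal ((3/4)^K)
          + ind (num_queries h > Q0 \<and> \<not> stopped h \<and> nullh h \<and> subs h < M \<and> cur h \<noteq> []) * \<top>"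
        by (rule hitD_le[OF inv[OF h]])
      also have "ind (num_queries h > Q0 \<and> \<not> stopped h \<and> nullh h \<and> subs h < M \<and> cur h \<noteq> []) = 0"
        using qb[OF h] by (simp add: ind_def)
      finally show "hitD p K M w P h \<le> HD1 p Q0 M w P h + cntD M P h * ennreal ((3/4)^K)" by simp
    qed
    also have "\<dots> = (\<integral>\<^sup>+h. HD1 p Q0 M w P h \<partial>hist p K w P t)
        + (\<integral>\<^sup>+h. cntD M P h \<partial>hist p K w P t) * ennreal ((3/4)^K)"
      by (simp add: nn_integral_add nn_integral_multc)
    also have "(\<integral>\<^sup>+h. HD1 p Q0 M w P h \<partial>hist p K w P t)
        \<le> ?W * (\<integral>\<^sup>+h. HD1 p Q0 M w P h \<partial>iterp (fstep p P) t)"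
      by (rule cmpQ) (auto simp: HD1_def ind_def)
    finally show ?thesis by (simp add: add_right_mono)
  qed
  have I5: "(\<Sum>t<n. (\<integral>\<^sup>+h. cntD M P h \<partial>hist p K w P t) * ennreal ((3/4)^K))
      \<le> ennreal ((3/4)^K) * of_nat M"
  proof -
    have "(\<Sum>t<n. (\<integral>\<^sup>+h. cntD M P h \<partial>hist p K w P t) * ennreal ((3/4)^K))
        = (\<Sum>t<n. (\<integral>\<^sup>+h. cntD M P h \<partial>hist p K w P t)) * ennreal ((3/4)^K)"
      by (simp add: sum_distrib_right)
    also have "\<dots> \<le> of_nat M * ennreal ((3/4)^K)"
      by (intro mult_right_mono count_real) simp
    finally show ?thesis by (simp add: mult.commute)
  qed
  have I6: "(\<integral>\<^sup>+h. Fo p Q0 w h \<partial>hist p K w P n) \<le> ?W * (\<integral>\<^sup>+h. Fo p Q0 w h \<partial>iterp (fstep p P) n)"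
    by (rule cmpQ) (auto simp: Fo_def ind_def)
  have "(\<integral>\<^sup>+h. ind (hitA_aux M 0 h) \<partial>hist p K w P n)
      \<le> (\<Sum>t<n. ?W * (\<integral>\<^sup>+h. HD1 p Q0 M w P h \<partial>iterp (fstep p P) t)
        + (\<integral>\<^sup>+h. cntD M P h \<partial>hist p K w P t) * ennreal ((3/4)^K))"
  proof -
    have "(\<Sum>t<n. \<integral>\<^sup>+h. hitD p K M w P h \<partial>hist p K w P t) \<le> (\<Sum>t<n. ?W * (\<integral>\<^sup>+h. HD1 p Q0 M w P h \<partial>iterp (fstep p P) t)
        + (\<integral>\<^sup>+h. cntD M P h \<partial>hist p K w P t) * ennreal ((3/4)^K))"
      by (rule sum_mono) (rule I4)
    then show ?thesis using I3 by (rule order_trans[rotated])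
  qed
  also have "\<dots> = (\<Sum>t<n. ?W * (\<integral>\<^sup>+h. HD1 p Q0 M w P h \<partial>iterp (fstep p P) t))
        + (\<Sum>t<n. (\<integral>\<^sup>+h. cntD M P h \<partial>hist p K w P t) * ennreal ((3/4)^K))"
    by (rule sum.distrib)
  also have "\<dots> \<le> (\<Sum>t<n. ?W * (\<integral>\<^sup>+h. HD1 p Q0 M w P h \<partial>iterp (fstep p P) t))
        + ennreal ((3/4)^K) * of_nat M"
    using I5 by (rule add_left_mono)
  finally have A: "(\<integral>\<^sup>+h. ind (hitA_aux M 0 h) \<partial>hist p K w P n) \<le> (\<Sum>t<n. ?W * (\<integral>\<^sup>+h. HD1 p Q0 M w P h \<partial>iterp (fstep p P) t))
        + ennreal ((3/4)^K) * of_nat M" .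
  have B: "(\<integral>\<^sup>+h. ind (M \<le> num_rounds h) \<partial>hist p K w P n)
      \<le> ennreal (1 / real M) * (\<integral>\<^sup>+h. ennreal (real (N_approx h)) \<partial>hist p K w P n)"
    by (rule markov[OF M])
  have "(\<integral>\<^sup>+h. ennreal (hist_reward p w h) \<partial>hist p K w P n)
      \<le> ((\<integral>\<^sup>+h. ind (hitA_aux M 0 h) \<partial>hist p K w P n)
        + (\<integral>\<^sup>+h. ind (M \<le> num_rounds h) \<partial>hist p K w P n)
        + (\<integral>\<^sup>+h. Fo p Q0 w h \<partial>hist p K w P n)) + ennreal ((3/4)^8)"
    using I1 I2 by (meson add_right_mono order_trans)
  also have "\<dots> \<le> ((\<Sum>t<n. ?W * (\<integral>\<^sup>+h. HD1 p Q0 M w P h \<partial>iterp (fstep p P) t))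
        + ennreal ((3/4)^K) * of_nat M
       + ennreal (1 / real M) * (\<integral>\<^sup>+h. ennreal (real (N_approx h)) \<partial>hist p K w P n)
       + ?W * (\<integral>\<^sup>+h. Fo p Q0 w h \<partial>iterp (fstep p P) n))
       + ennreal ((3/4)^8)"
    by (intro add_mono A B I6 order_refl)
  finally show ?thesis .
qed


lemma main_ineq:
  assumes valid: "valid_planner p K P" and p0: "0 < p" and finS: "finite S" and Sc: "S \<subseteq> cube p"
    and qb: "\<And>w n h. w \<in> S \<Longrightarrow> h \<in> set_pmf (hist p K w P n) \<Longrightarrow> num_queries h \<le> Q0"
    and TN: "\<And>w n. w \<in> S \<Longrightarrow> (\<integral>\<^sup>+h. ennreal (real (N_approx h)) \<partial>hist p K w P n) \<le> ennreal T"
    and M: "0 < M"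
  shows "(\<Sum>w\<in>S. \<integral>\<^sup>+h. ennreal (hist_reward p w h) \<partial>hist p K w P n)
     \<le> of_nat ((p+1)^Q0) * (2 * of_nat (bcount p) * of_nat M) + of_nat ((p+1)^Q0) * (8 * of_nat (bcount p))
       + of_nat (card S) * (ennreal ((3/4)^K) * of_nat M + ennreal (1 / real M) * ennreal T + ennreal ((3/4)^8))"
proof -
  let ?W = "of_nat ((p+1)^Q0) :: ennreal"
  let ?c = "ennreal ((3/4)^K) * of_nat M + ennreal (1 / real M) * ennreal T + ennreal ((3/4)^8)"
  define a where "a w = (\<Sum>t<n. ?W * (\<integral>\<^sup>+h. HD1 p Q0 M w P h \<partial>iterp (fstep p P) t))" for w
  define d where "d w = ?W * (\<integral>\<^sup>+h. Fo p Q0 w h \<partial>iterp (fstep p P) n)" for w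
  have pw: "(\<integral>\<^sup>+h. ennreal (hist_reward p w h) \<partial>hist p K w P n) \<le> a w + d w + ?c" if w: "w \<in> S" for w
  proof -
    have wc: "w \<in> cube p" using w Sc by auto
    have "(\<integral>\<^sup>+h. ennreal (hist_reward p w h) \<partial>hist p K w P n)
     \<le> a w + ennreal ((3/4)^K) * of_nat M
       + ennreal (1 / real M) * (\<integral>\<^sup>+h. ennreal (real (N_approx h)) \<partial>hist p K w P n)
       + d w + ennreal ((3/4)^8)"
      unfolding a_def d_def by (rule per_w[OF valid p0 wc qb[OF w] M])
    also have "\<dots> \<le> a w + ennreal ((3/4)^K) * of_nat M
       + ennreal (1 / real M) * ennreal T + d w + ennreal ((3/4)^8)"
      by (intro add_mono order_refl mult_left_mono TN w) simp
    also have "\<dots> = a w + d w + ?c" by (simp add: ac_simps)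
    finally show ?thesis .
  qed
  have "(\<Sum>w\<in>S. \<integral>\<^sup>+h. ennreal (hist_reward p w h) \<partial>hist p K w P n) \<le> (\<Sum>w\<in>S. a w + d w + ?c)"
    by (intro sum_mono pw)
  also have "\<dots> = (\<Sum>w\<in>S. a w) + (\<Sum>w\<in>S. d w) + of_nat (card S) * ?c"
    by (simp add: sum.distrib)
  also have "(\<Sum>w\<in>S. a w) \<le> ?W * (2 * of_nat (bcount p) * of_nat M)"
  proof -
    have "(\<Sum>w\<in>S. a w) = (\<Sum>t<n. ?W * (\<integral>\<^sup>+h. (\<Sum>w\<in>S. HD1 p Q0 M w P h) \<partial>iterp (fstep p P) t))"
      unfolding a_def by (subst sum.swap) (simp add: sum_distrib_left nn_integral_sum)
    also have "\<dots> \<le> (\<Sum>t<n. ?W * (\<integral>\<^sup>+h. 2 * of_nat (bcount p) * cntD M P h \<partial>iterp (fstep p P) t))"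
      by (intro sum_mono mult_left_mono nn_integral_mono HD1_sum finS Sc) simp
    also have "\<dots> = ?W * (2 * of_nat (bcount p)) * (\<Sum>t<n. (\<integral>\<^sup>+h. cntD M P h \<partial>iterp (fstep p P) t))"
      by (simp add: nn_integral_cmult sum_distrib_left mult.assoc)
    also have "\<dots> \<le> ?W * (2 * of_nat (bcount p)) * of_nat M"
      by (intro mult_left_mono count_fake) simp
    finally show ?thesis by (simp add: mult.assoc)
  qed
  also have "(\<Sum>w\<in>S. d w) \<le> ?W * (8 * of_nat (bcount p))"
  proof -
    have "(\<Sum>w\<in>S. d w) = ?W * (\<integral>\<^sup>+h. (\<Sum>w\<in>S. Fo p Q0 w h) \<partial>iterp (fstep p P) n)"
      unfolding d_def by (simp add: sum_distrib_left nn_integral_sum)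
    also have "\<dots> \<le> ?W * (8 * of_nat (bcount p))"
      by (intro mult_left_mono nn_int_le_const Fo_sum finS Sc) simp
    finally show ?thesis .
  qed
  finally show ?thesis by (simp add: add_mono)
qed


lemma hdist_not1: "hdist x (map Not x) = length x"
proof -
  have "{i. i < length x \<and> x ! i \<noteq> map Not x ! i} = {i. i < length x}" by auto
  then show ?thesis unfolding hdist_def by simp
qed

lemma hdist_not2: "hdist (map Not x) x = length x"
proof -
  have "{i. i < length (map Not x) \<and> map Not x ! i \<noteq> x ! i} = {i. i < length x}" by auto
  then show ?thesis unfolding hdist_def by simp
qed

lemma finite_Wcirc: "finite (Wcirc p k)"
proof -
  have "Wcirc p k \<subseteq> {xs. set xs \<subseteq> cube p \<and> length xs = k}"
    by (auto simp: Wcirc_def chain_ok_def)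
  then show ?thesis using finite_lists_length_eq[OF finite_cube] finite_subset by blast
qed

lemma opt_ge:
  assumes w: "w \<in> Wstar p" and p0: "0 < p"
  shows "1/4 \<le> opt_reward p w"
proof -
  define nw where "nw = map Not w"
  define ws where "ws = [w, nw, w, nw, w, nw, w, nw]"
  have wc: "w \<in> cube p" and d1: "real p / 4 \<le> real (hdist (ones p) w)"
    and d2: "real (hdist (ones p) w) \<le> 3 * real p / 4"
    using w by (auto simp: Wstar_def)
  have lw: "length w = p" using wc by (simp add: cube_def)
  have nwc: "nw \<in> cube p" using lw by (simp add: nw_def cube_def)
  have h1: "hdist w nw = p" using lw by (simp add: nw_def hdist_not1)
  have h2: "hdist nw w = p" using lw by (simp add: nw_def hdist_not2)
  have pp: "real p / 4 \<le> real p" by simp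
  have "chain_ok p ws"
    unfolding chain_ok_def
  proof (intro conjI allI impI)
    show "set ws \<subseteq> cube p" using wc nwc by (simp add: ws_def)
    fix i assume "i < length ws"
    then have "i < 8" by (simp add: ws_def)
    then have "i = 0 \<or> i = 1 \<or> i = 2 \<or> i = 3 \<or> i = 4 \<or> i = 5 \<or> i = 6 \<or> i = 7" by linarith
    then show "real p / 4 \<le> real (hdist ((ones p # ws) ! i) (ws ! i))"
      using d1 pp h1 h2 by (auto simp: ws_def)
  qed
  then have wsW: "ws \<in> Wcirc p 8" by (simp add: Wcirc_def ws_def)
  have cl: "close p w w" using p0 by (simp add: close_def)
  have ks: "kstar p w ws = 1"
  proof -
    have ex: "\<exists>k\<in>{1..8}. close p (ws ! (k - 1)) w" using cl by (auto simp: ws_def intro!: bexI[of _ 1])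
    have "(LEAST k. 1 \<le> k \<and> k \<le> 8 \<and> close p (ws ! (k - 1)) w) = (1::nat)"
      by (rule Least_equality) (use cl in \<open>auto simp: ws_def\<close>)
    then show ?thesis using ex by (simp add: kstar_def)
  qed
  have "final_reward p w ws = gfun p (hdist (ones p) w)"
    using ks by (simp add: final_reward_def fval_def ws_def gfun_def)
  also have "\<dots> \<ge> 1/4" using d2 p0 by (simp add: gfun_def field_simps)
  finally have fr: "1/4 \<le> final_reward p w ws" .
  have "final_reward p w ws \<le> opt_reward p w"
    unfolding opt_reward_def using wsW finite_Wcirc by (intro Max_ge) auto
  then show ?thesis using fr by linarith
qed

lemma card_cube: "card (cube p) = 2 ^ p"
proof -
  have "cube p = {xs. set xs \<subseteq> (UNIV :: bool set) \<and> length xs = p}" by (auto simp: cube_def)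
  then show ?thesis using card_lists_length_eq[of "UNIV :: bool set" p] by (simp add: card_UNIV_bool)
qed

lemma hdist_sum:
  assumes "w \<in> cube p"
  shows "hdist (ones p) w + hdist (replicate p False) w = p"
proof -
  have "{i. i < length (ones p) \<and> ones p ! i \<noteq> w ! i} = {i. i < p \<and> \<not> w ! i}"
    by (auto simp: ones_def)
  then have "hdist (ones p) w = card {i. i < p \<and> \<not> w ! i}" by (simp add: hdist_def)
  moreover have "{i. i < length (replicate p False) \<and> replicate p False ! i \<noteq> w ! i} = {i. i < p \<and> w ! i}"
    by auto
  then have "hdist (replicate p False) w = card {i. i < p \<and> w ! i}" by (simp add: hdist_def)
  moreover have "card {i. i < p \<and> \<not> w ! i} + card {i. i < p \<and> w ! i} = card ({i. i < p \<and> \<not> w ! i} \<union> {i. i < p \<and> w ! i})"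
    by (rule card_Un_disjoint[symmetric]) auto
  moreover have "{i. i < p \<and> \<not> w ! i} \<union> {i. i < p \<and> w ! i} = {i. i < p}" by auto
  ultimately show ?thesis by simp
qed

lemma card_Wstar: "real (2 ^ p) - 2 * real (bcount p) \<le> real (card (Wstar p))"
proof -
  define B1 where "B1 = {w \<in> cube p. close p (ones p) w}"
  define B0 where "B0 = {w \<in> cube p. close p (replicate p False) w}"
  have sub: "cube p - (B1 \<union> B0) \<subseteq> Wstar p"
  proof
    fix w assume w: "w \<in> cube p - (B1 \<union> B0)"
    then have wc: "w \<in> cube p" and n1: "\<not> close p (ones p) w" and n0: "\<not> close p (replicate p False) w"
      by (auto simp: B1_def B0_def)
    have s: "real (hdist (ones p) w) + real (hdist (replicate p False) w) = real p"
      using hdist_sum[OF wc] by (metis of_nat_add)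
    show "w \<in> Wstar p" using wc n1 n0 s by (simp add: Wstar_def close_def)
  qed
  have fin: "finite (Wstar p)" by (rule finite_subset[OF _ finite_cube]) (auto simp: Wstar_def)
  have fB: "finite (B1 \<union> B0)" by (rule finite_subset[OF _ finite_cube]) (auto simp: B1_def B0_def)
  have "card (cube p - (B1 \<union> B0)) \<le> card (Wstar p)" by (rule card_mono[OF fin sub])
  moreover have "card (cube p - (B1 \<union> B0)) = card (cube p) - card (B1 \<union> B0)"
    by (rule card_Diff_subset[OF fB]) (auto simp: B1_def B0_def)
  moreover have "card (B1 \<union> B0) \<le> card B1 + card B0" by (rule card_Un_le)
  moreover have "card B1 \<le> bcount p" unfolding B1_def by (rule ball_card) simp
  moreover have "card B0 \<le> bcount p" unfolding B0_def by (rule ball_card) (simp add: cube_def)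
  ultimately have "card (cube p) - 2 * bcount p \<le> card (Wstar p)" by linarith
  then show ?thesis using card_cube[of p] by linarith
qed

lemma bcount_bound:
  assumes "p = 4 * j"
  shows "real (bcount p) \<le> (256/27) ^ j"
proof -
  have eq: "{A. A \<subseteq> {..<p} \<and> 4 * card A < p} = (\<Union>k\<in>{..<j}. {A. A \<subseteq> {..<p} \<and> card A = k})"
    using assms by auto
  have "bcount p \<le> (\<Sum>k<j. card {A. A \<subseteq> {..<p} \<and> card A = k})"
    unfolding bcount_def eq by (rule card_UN_le) simp
  also have "\<dots> = (\<Sum>k<j. p choose k)" by (simp add: n_subsets)
  finally have b1: "real (bcount p) \<le> (\<Sum>k<j. real (p choose k))" by (metis of_nat_le_iff of_nat_sum)
  have "(\<Sum>k<j. real (p choose k)) \<le> (\<Sum>k<j. real (p choose k) * (3 ^ j * (1/3) ^ k))"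
  proof (intro sum_mono)
    fix k assume "k \<in> {..<j}"
    then have "k \<le> j" by simp
    then have "(3::real) ^ k \<le> 3 ^ j" by (intro power_increasing) auto
    then have "1 \<le> (3::real) ^ j * (1/3) ^ k" by (simp add: field_simps power_divide)
    then show "real (p choose k) \<le> real (p choose k) * (3 ^ j * (1/3) ^ k)"
      by (metis mult_le_cancel_left1 of_nat_0_le_iff order.trans mult.right_neutral mult_left_mono)
  qed
  also have "\<dots> = 3 ^ j * (\<Sum>k<j. real (p choose k) * (1/3) ^ k)"
    by (simp add: sum_distrib_left mult_ac)
  finally have b2: "(\<Sum>k<j. real (p choose k)) \<le> 3 ^ j * (\<Sum>k<j. real (p choose k) * (1/3) ^ k)" .
  have b3: "(\<Sum>k<j. real (p choose k) * (1/3) ^ k) \<le> (\<Sum>k\<le>p. real (p choose k) * (1/3) ^ k)"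
    using assms by (intro sum_mono2) auto
  have b4: "(\<Sum>k\<le>p. real (p choose k) * (1/3) ^ k) = (1/3 + 1) ^ p"
    by (subst binomial_ring) simp
  have b5: "(1/3 + 1::real) ^ p = ((4/3)^4) ^ j"
    using assms by (simp add: power_mult)
  have b6: "(3::real) ^ j * ((4/3)^4) ^ j = (3 * (4/3)^4) ^ j"
    by (rule power_mult_distrib[symmetric])
  have b7: "(3::real) * (4/3)^4 = 256/27" by (simp add: power_divide)
  have "(3::real) ^ j * (\<Sum>k<j. real (p choose k) * (1/3) ^ k) \<le> 3 ^ j * ((4/3)^4) ^ j"
    using b3 b4 b5 by (intro mult_left_mono) auto
  then show ?thesis using b1 b2 b6[unfolded b7] by linarith
qed


lemma two_powr_m11: "(2::real) powr (-11) = 1/2048"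
  by (simp add: powr_minus)

lemma base_le_powr:
  fixes a u :: real and n :: nat
  assumes a: "0 \<le> a" and n: "0 < n" and h: "a ^ n \<le> 2 powr (real n * u)"
  shows "a \<le> 2 powr u"
proof -
  have "(2 powr u) ^ n = 2 powr (real n * u)" by (simp add: powr_power)
  then have "a ^ n \<le> (2 powr u) ^ n" using h by simp
  moreover obtain m where "n = Suc m" using n by (cases n) auto
  ultimately show ?thesis using power_le_imp_le_base[of a m "2 powr u"] by simp
qed

lemma pow_le_powr:
  fixes a u :: real and k :: nat
  assumes a: "0 < a" "a \<le> 2 powr u"
  shows "a ^ k \<le> 2 powr (u * real k)"
proof -
  have "a ^ k = a powr real k" using a by (simp add: powr_realpow)
  also have "\<dots> \<le> (2 powr u) powr real k" using a by (intro powr_mono2) auto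
  also have "\<dots> = 2 powr (u * real k)" by (simp add: powr_powr)
  finally show ?thesis .
qed

lemma eps_bound: "(3/4::real) ^ K \<le> 2 powr (- real K / 4)"
proof -
  have "(3/4::real) \<le> 2 powr (-1/4)"
    by (rule base_le_powr[where n = 4]) (auto simp: powr_minus power_divide)
  then have "(3/4::real) ^ K \<le> 2 powr ((-1/4) * real K)" by (intro pow_le_powr) auto
  then show ?thesis by (simp add: field_simps)
qed

lemma q_bound: "(16/27::real) ^ j \<le> 2 powr (- real j / 2)"
proof -
  have "(16/27::real) \<le> 2 powr (-1/2)"
    by (rule base_le_powr[where n = 2]) (auto simp: powr_minus power_divide)
  then have "(16/27::real) ^ j \<le> 2 powr ((-1/2) * real j)" by (intro pow_le_powr) auto
  then show ?thesis by (simp add: field_simps)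
qed

lemma numeric:
  fixes cS B W0 M T :: real and j K :: nat
  assumes j: "250 \<le> j" and K: "1000 \<le> K"
    and cS0: "0 \<le> cS" and cS: "16^j - 2*B \<le> cS" and B0: "0 \<le> B" and Bb: "B \<le> (256/27)^j"
    and W0: "0 \<le> W0" "W0 \<le> 2 powr (real j / 32)"
    and T1: "1 \<le> T" and Tj: "T \<le> 2 powr (real j / 32)" and TK: "T \<le> 2 powr (real K / 128)"
    and M1: "16*T \<le> M" and M2: "M \<le> 16*T + 1"
    and ineq: "23/100 * cS \<le> W0*(2*B*M) + W0*(8*B) + cS*((3/4)^K * M + (1/M)*T + (3/4)^8)"
  shows False
proof -
  define X :: real where "X = 16^j"
  define q :: real where "q = 2 powr (- real j / 2)"
  define x :: real where "x = 2 powr (real j / 32)"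
  have X0: "0 < X" by (simp add: X_def)
  have q0: "0 \<le> q" by (simp add: q_def)
  have Mpos: "0 < M" using M1 T1 by linarith
  have BX: "B \<le> X * q"
  proof -
    have "(256/27::real)^j = X * (16/27)^j"
      by (simp add: X_def power_mult_distrib[symmetric])
    also have "\<dots> \<le> X * q" using q_bound X0 by (simp add: q_def)
    finally show ?thesis using Bb by linarith
  qed
  have q4: "q \<le> 1/4"
  proof -
    have "q \<le> 2 powr (-2)" unfolding q_def using j by (intro powr_mono) auto
    then show ?thesis by (simp add: powr_minus)
  qed
  have cShalf: "X / 2 \<le> cS"
  proof -
    have "X * q \<le> X * (1/4)" using q4 X0 by (intro mult_left_mono) auto
    then show ?thesis using cS BX X_def by linarith
  qed
  have epsM: "(3/4::real)^K * M \<le> 1/64"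
  proof -
    have "(3/4::real)^K * M \<le> (3/4)^K * (17 * T)" using M2 T1 by (intro mult_left_mono) auto
    also have "\<dots> \<le> 2 powr (- real K / 4) * (17 * 2 powr (real K / 128))"
      using eps_bound TK T1 by (intro mult_mono) auto
    also have "\<dots> = 17 * 2 powr (- real K / 4 + real K / 128)"
      by (simp only: powr_add mult.assoc mult.left_commute mult.commute)
    also have "\<dots> \<le> 17 * 2 powr (-11)" using K by (intro mult_left_mono powr_mono) auto
    also have "\<dots> \<le> 1/64" by (simp add: two_powr_m11)
    finally show ?thesis .
  qed
  have TM: "(1/M) * T \<le> 1/16" using M1 Mpos T1 by (simp add: field_simps)
  have c8: "(3/4::real)^8 = 6561/65536" by (simp add: power_divide)
  have stuff: "(3/4)^K * M + (1/M)*T + (3/4)^8 \<le> 1/64 + 1/16 + 6561/65536"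
    using epsM TM c8 by linarith
  have "cS * ((3/4)^K * M + (1/M)*T + (3/4)^8) \<le> cS * (1/64 + 1/16 + 6561/65536)"
    using stuff cS0 by (intro mult_left_mono) auto
  moreover have eqW: "W0*(2*B*M) + W0*(8*B) = W0 * B * (2 * M + 8)" by (simp add: algebra_simps)
  ultimately have Y1: "cS * ((3/4)^K * M + (1/M)*T + (3/4)^8) \<le> cS * (1/64 + 1/16 + 6561/65536)"
    and Y2: "23/100 * cS \<le> W0 * B * (2 * M + 8) + cS * ((3/4)^K * M + (1/M)*T + (3/4)^8)"
    using ineq by auto
  have r: "(1/64 + 1/16 + 6561/65536::real) = 11681/65536" by simp
  have key: "0 \<le> c \<Longrightarrow> Y \<le> c * (11681/65536) \<Longrightarrow> 23/100*c \<le> Z + Y \<Longrightarrow> c/20 \<le> Z" for Y Z c :: real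
    by linarith
  have A: "cS / 20 \<le> W0 * B * (2 * M + 8)" by (rule key[OF cS0 Y1[unfolded r] Y2])
  have "W0 * B * (2 * M + 8) \<le> x * (X * q) * (42 * x)"
  proof (intro mult_mono)
    show "W0 \<le> x" using W0 by (simp add: x_def)
    show "B \<le> X * q" by (rule BX)
    show "2 * M + 8 \<le> 42 * x" using M2 T1 Tj by (simp add: x_def)
  qed (use W0 B0 X0 q0 Mpos in \<open>auto simp: x_def\<close>)
  also have "\<dots> = 42 * X * (q * x * x)" by (simp add: algebra_simps)
  also have "q * x * x = 2 powr (- real j / 2 + real j / 32 + real j / 32)"
    unfolding q_def x_def by (simp only: powr_add mult.assoc)
  also have "\<dots> \<le> 2 powr (-11)" using j by (intro powr_mono) auto
  finally have "W0 * B * (2 * M + 8) \<le> 42 * X * (1/2048)"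
    using X0 by (simp add: two_powr_m11)
  then show False using A cShalf X0 by linarith
qed





lemma W0_bound:
  fixes p Q0 :: nat
  assumes p2: "2 \<le> p" and Q: "real Q0 \<le> (ln 2 / 256) * real p / ln (real p)"
  shows "real ((p+1)^Q0) \<le> 2 powr (real p / 128)"
proof -
  have lp: "0 < ln (real p)" using p2 by simp
  have pp: "real p + 1 \<le> real p ^ 2"
  proof -
    have "2 * p \<le> p * p" using p2 by (intro mult_right_mono) auto
    then have "p + 1 \<le> p * p" using p2 by linarith
    then have "real (p + 1) \<le> real (p * p)" by (simp only: of_nat_le_iff)
    then have "real p + 1 \<le> real p * real p" by simp
    then show ?thesis by (simp add: power2_eq_square)
  qed
  have l1: "ln (real p + 1) \<le> 2 * ln (real p)"
  proof -
    have "ln (real p + 1) \<le> ln (real p ^ 2)" using pp p2 by (subst ln_le_cancel_iff) auto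
    also have "\<dots> = 2 * ln (real p)" by (simp add: ln_realpow)
    finally show ?thesis .
  qed
  have "real ((p+1)^Q0) = (real p + 1) powr real Q0" by (simp add: powr_realpow add.commute)
  also have "\<dots> = exp (real Q0 * ln (real p + 1))" by (simp add: powr_def)
  also have "\<dots> \<le> exp ((ln 2 / 256) * real p / ln (real p) * (2 * ln (real p)))"
  proof -
    have "real Q0 * ln (real p + 1) \<le> (ln 2 / 256) * real p / ln (real p) * (2 * ln (real p))"
      using Q l1 by (intro mult_mono) auto
    then show ?thesis by simp
  qed
  also have "(ln 2 / 256) * real p / ln (real p) * (2 * ln (real p)) = real p / 128 * ln 2"
    using lp by (simp add: field_simps)
  also have "exp (real p / 128 * ln 2) = 2 powr (real p / 128)" by (simp add: powr_def)
  finally show ?thesis .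
qed

lemma reward_mono:
  assumes "n \<le> m"
  shows "(\<integral>\<^sup>+h. ennreal (hist_reward p w h) \<partial>hist p K w P n) \<le> (\<integral>\<^sup>+h. ennreal (hist_reward p w h) \<partial>hist p K w P m)"
proof (rule lift_Suc_mono_le[OF _ assms])
  fix n
  have "(\<integral>\<^sup>+h. ennreal (hist_reward p w h) \<partial>hist p K w P n)
     \<le> (\<integral>\<^sup>+h. (\<integral>\<^sup>+h'. ennreal (hist_reward p w h') \<partial>step p K w P h) \<partial>hist p K w P n)"
  proof (intro nn_integral_mono)
    fix h
    show "ennreal (hist_reward p w h) \<le> (\<integral>\<^sup>+h'. ennreal (hist_reward p w h') \<partial>step p K w P h)"
    proof (cases "stopped h")
      case True then show ?thesis by (simp add: step_def)
    next
      case False then show ?thesis by (simp add: hist_reward_def)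
    qed
  qed
  then show "(\<integral>\<^sup>+h. ennreal (hist_reward p w h) \<partial>hist p K w P n) \<le> (\<integral>\<^sup>+h. ennreal (hist_reward p w h) \<partial>hist p K w P (Suc n))"
    by simp
qed

lemma main6:
  fixes p K :: nat and P :: planner
  assumes dvd: "4 dvd p" and m0: "1000 \<le> min p K" and K1: "1 \<le> K"
    and valid: "valid_planner p K P" and snd: "sound p K P"
    and qbd: "query_bounded p K P (ln 2 / 256 * real p / ln (real p))"
  shows "\<exists>wst \<in> Wstar p. ennreal (2 powr (1/128 * real (min p K))) \<le> expected_N p K wst P"
  proof (rule ccontr)
    assume neg: "\<not> (\<exists>wst \<in> Wstar p. ennreal (2 powr (1/128 * real (min p K))) \<le> expected_N p K wst P)"
    define T where "T = 2 powr (1/128 * real (min p K))"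
    define S where "S = Wstar p"
    obtain j where pj: "p = 4 * j" using dvd by blast
    have p1000: "1000 \<le> p" and K1000: "1000 \<le> K" using m0 by auto
    have j250: "250 \<le> j" using p1000 pj by linarith
    have p0: "0 < p" using p1000 by linarith
    define X where "X = ln 2 / 256 * real p / ln (real p)"
    have X0: "0 \<le> X" unfolding X_def using p1000 by (intro divide_nonneg_pos mult_nonneg_nonneg) auto
    define Q0 where "Q0 = nat \<lfloor>X\<rfloor>"
    have Q0X: "real Q0 \<le> X" unfolding Q0_def using X0 by simp
    have finS: "finite S" unfolding S_def by (rule finite_subset[OF _ finite_cube]) (auto simp: Wstar_def)
    have Sc: "S \<subseteq> cube p" by (auto simp: S_def Wstar_def)
    have qb: "num_queries h \<le> Q0" if "w \<in> S" "h \<in> set_pmf (hist p K w P n)" for w n h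
    proof -
      have "real (num_queries h) < X" using qbd that by (auto simp: query_bounded_def S_def X_def)
      then have "int (num_queries h) \<le> \<lfloor>X\<rfloor>" by (simp add: le_floor_iff)
      then show ?thesis unfolding Q0_def by linarith
    qed
    have TN: "(\<integral>\<^sup>+h. ennreal (real (N_approx h)) \<partial>hist p K w P n) \<le> ennreal T" if "w \<in> S" for w n
    proof -
      have "\<not> ennreal T \<le> expected_N p K w P" using neg that by (auto simp: S_def T_def)
      then have "expected_N p K w P < ennreal T" by simp
      moreover have "(\<integral>\<^sup>+h. ennreal (real (N_approx h)) \<partial>hist p K w P n) \<le> expected_N p K w P"
        unfolding expected_N_def by (rule SUP_upper) simp
      ultimately show ?thesis by simp
    qed
    have T1: "1 \<le> T" unfolding T_def by (rule ge_one_powr_ge_zero) auto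
    define M where "M = nat \<lceil>16 * T\<rceil>"
    have M1: "16 * T \<le> real M" unfolding M_def by linarith
    have M2: "real M \<le> 16 * T + 1" unfolding M_def using T1 by linarith
    have M0: "0 < M" using M1 T1 by linarith
    have sound_w: "\<exists>n. ennreal (23/100) < (\<integral>\<^sup>+h. ennreal (hist_reward p w h) \<partial>hist p K w P n)" if w: "w \<in> S" for w
    proof -
      have wS: "w \<in> Wstar p" using w by (simp add: S_def)
      have "\<bar>expected_R p K w P - opt_reward p w\<bar> \<le> 0.01" using snd wS unfolding sound_def by blast
      moreover have "(0.01::real) = 1/100" by simp
      moreover have "1/4 \<le> opt_reward p w" by (rule opt_ge[OF wS p0])
      ultimately have ER: "24/100 \<le> expected_R p K w P" by (simp only: abs_le_iff) linarith
      define Y where "Y = (SUP n. \<integral>\<^sup>+h. ennreal (hist_reward p w h) \<partial>hist p K w P n)"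
      have e2: "24/100 \<le> enn2real Y" using ER by (simp add: expected_R_def Y_def)
      then have "Y \<noteq> \<top>" by auto
      then have "Y = ennreal (enn2real Y)" by (simp add: less_top)
      moreover have "ennreal (23/100) < ennreal (enn2real Y)" using e2 by (simp add: ennreal_less_iff)
      ultimately have "ennreal (23/100) < Y" by simp
      then show ?thesis unfolding Y_def by (simp add: less_SUP_iff)
    qed
    then obtain nf where nf: "\<forall>w\<in>S. ennreal (23/100) < (\<integral>\<^sup>+h. ennreal (hist_reward p w h) \<partial>hist p K w P (nf w))"
      by metis
    define N where "N = Max (nf ` S)"
    have IN: "ennreal (23/100) \<le> (\<integral>\<^sup>+h. ennreal (hist_reward p w h) \<partial>hist p K w P N)" if "w \<in> S" for w
    proof -
      have "nf w \<le> N" unfolding N_def using finS that by (intro Max_ge) auto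
      then have "(\<integral>\<^sup>+h. ennreal (hist_reward p w h) \<partial>hist p K w P (nf w)) \<le> (\<integral>\<^sup>+h. ennreal (hist_reward p w h) \<partial>hist p K w P N)"
        by (rule reward_mono)
      then show ?thesis using nf that by (meson less_imp_le order_trans)
    qed
    have "of_nat (card S) * ennreal (23/100) = (\<Sum>w\<in>S. ennreal (23/100))" by simp
    also have "\<dots> \<le> (\<Sum>w\<in>S. \<integral>\<^sup>+h. ennreal (hist_reward p w h) \<partial>hist p K w P N)"
      by (intro sum_mono IN)
    also have "\<dots> \<le> of_nat ((p+1)^Q0) * (2 * of_nat (bcount p) * of_nat M) + of_nat ((p+1)^Q0) * (8 * of_nat (bcount p))
       + of_nat (card S) * (ennreal ((3/4)^K) * of_nat M + ennreal (1 / real M) * ennreal T + ennreal ((3/4)^8))"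
      by (rule main_ineq[OF valid p0 finS Sc qb TN M0])
    finally have EI: "of_nat (card S) * ennreal (23/100) \<le> of_nat ((p+1)^Q0) * (2 * of_nat (bcount p) * of_nat M) + of_nat ((p+1)^Q0) * (8 * of_nat (bcount p))
       + of_nat (card S) * (ennreal ((3/4)^K) * of_nat M + ennreal (1 / real M) * ennreal T + ennreal ((3/4)^8))" .
    define cS where "cS = real (card S)"
    define B where "B = real (bcount p)"
    define W0 where "W0 = real ((p+1)^Q0)"
    define Mr where "Mr = real M"
    have T0: "0 \<le> T" using T1 by simp
    have L: "of_nat (card S) * ennreal (23/100) = ennreal (23/100 * cS)"
    proof -
      have "ennreal (23/100 * cS) = ennreal (23/100) * ennreal cS" by (rule ennreal_mult) (auto simp: cS_def)
      then show ?thesis unfolding cS_def by (metis ennreal_of_nat_eq_real_of_nat mult.commute)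
    qed
    have hT: "ennreal (1 / real M) * ennreal T = ennreal (T / real M)"
      using T0 by (subst ennreal_mult[symmetric]) auto
    have R: "of_nat ((p+1)^Q0) * (2 * of_nat (bcount p) * of_nat M) + of_nat ((p+1)^Q0) * (8 * of_nat (bcount p))
       + of_nat (card S) * (ennreal ((3/4)^K) * of_nat M + ennreal (1 / real M) * ennreal T + ennreal ((3/4)^8))
       = ennreal (W0*(2*B*Mr) + W0*(8*B) + cS*((3/4)^K * Mr + (1/Mr)*T + (3/4)^8))"
      using T0 hT by (simp add: cS_def B_def W0_def Mr_def ennreal_of_nat_eq_real_of_nat ennreal_mult ennreal_plus)
    have ineq: "23/100 * cS \<le> W0*(2*B*Mr) + W0*(8*B) + cS*((3/4)^K * Mr + (1/Mr)*T + (3/4)^8)"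
    proof -
      have "0 \<le> W0*(2*B*Mr) + W0*(8*B) + cS*((3/4)^K * Mr + (1/Mr)*T + (3/4)^8)"
        using T0 by (simp add: cS_def B_def W0_def Mr_def)
      then show ?thesis using EI unfolding L R by simp
    qed
    have cS_lb: "16^j - 2*B \<le> cS"
    proof -
      have "(2::real)^p = 16^j" using pj by (simp add: power_mult)
      then show ?thesis using card_Wstar[of p] by (simp add: cS_def B_def S_def)
    qed
    have Bb: "B \<le> (256/27)^j" unfolding B_def by (rule bcount_bound[OF pj])
    have W0b: "W0 \<le> 2 powr (real j / 32)"
    proof -
      have "W0 \<le> 2 powr (real p / 128)" unfolding W0_def
        using p1000 Q0X by (intro W0_bound) (auto simp: X_def)
      also have "real p / 128 = real j / 32" using pj by simp
      finally show ?thesis .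
    qed
    have Tj: "T \<le> 2 powr (real j / 32)"
    proof -
      have "T \<le> 2 powr (real p / 128)" unfolding T_def by (intro powr_mono) auto
      also have "real p / 128 = real j / 32" using pj by simp
      finally show ?thesis .
    qed
    have TK: "T \<le> 2 powr (real K / 128)" unfolding T_def by (intro powr_mono) auto
    show False
      by (rule numeric[OF j250 K1000 _ cS_lb _ Bb _ W0b T1 Tj TK, of Mr])
         (use M1 M2 ineq in \<open>auto simp: cS_def B_def W0_def Mr_def\<close>)
  qed

theorem theorem6:
  shows "\<exists>c1 > 0. \<exists>c2 > 0. \<exists>m0::nat. \<forall>p K (P::planner).
           4 dvd p \<longrightarrow> m0 \<le> min p K \<longrightarrow> 1 \<le> K \<longrightarrow>
           valid_planner p K P \<longrightarrow> sound p K P \<longrightarrow>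
           query_bounded p K P (c1 * real p / ln (real p)) \<longrightarrow>
           (\<exists>wst \<in> Wstar p. ennreal (2 powr (c2 * real (min p K))) \<le> expected_N p K wst P)"
proof -
  have "0 < ln (2::real) / 256" by simp
  moreover have "0 < (1/128::real)" by simp
  moreover have "\<forall>p K (P::planner).
           4 dvd p \<longrightarrow> 1000 \<le> min p K \<longrightarrow> 1 \<le> K \<longrightarrow>
           valid_planner p K P \<longrightarrow> sound p K P \<longrightarrow>
           query_bounded p K P (ln 2 / 256 * real p / ln (real p)) \<longrightarrow>
           (\<exists>wst \<in> Wstar p. ennreal (2 powr (1/128 * real (min p K))) \<le> expected_N p K wst P)"
    using main6 by blast
  ultimately show ?thesis by blast
qed


end
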